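(* For every integer $n \geq 1$, $\left\langle m_{(1,1)}^n, s_{(2^n)} \right\rangle = R(n)$.
   Context: $m_\lambda$ and $s_\lambda$ denote the monomial and Schur symmetric functions, and $\langle\cdot,\cdot\rangle$ is the Hall inner product on symmetric functions (for which the Schur functions are orthonormal). $m_{(1,1)} = \sum_{i<j} x_i x_j$, and $(2^n)$ is the partition with $n$ parts equal to $2$. $R(n)$ is the $n$-th Riordan number: the number of Motzkin paths of length $n$ (lattice paths from $(0,0)$ to $(n,0)$ with steps $(1,1),(1,0),(1,-1)$ never going below the $x$-axis) that have no flat step $(1,0)$ on the $x$-axis. *)

theory Defs
  imports Main "HOL-Library.Poly_Mapping"
begin

text \<open>Polynomials in the variables x_0, x_1, ... with integer coefficients:
  finitely supported maps from exponent vectors (nat to nat, finitely supported) to int,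
  with the convolution product of HOL-Library.Poly_Mapping.\<close>

type_synonym ipoly = "(nat \<Rightarrow>\<^sub>0 nat) \<Rightarrow>\<^sub>0 int"

definition var :: "nat \<Rightarrow> ipoly" where
  "var i = Poly_Mapping.single (Poly_Mapping.single i 1) 1"

definition const :: "int \<Rightarrow> ipoly" where
  "const c = Poly_Mapping.single 0 c"

definition is_partition :: "nat list \<Rightarrow> bool" where
  "is_partition lam \<longleftrightarrow> sorted_wrt (\<ge>) lam \<and> 0 \<notin> set lam"

definition partitions_of :: "nat \<Rightarrow> nat list set" where
  "partitions_of d = {lam. is_partition lam \<and> sum_list lam = d}"

definition m11 :: "nat \<Rightarrow> ipoly" where
  "m11 N = (\<Sum>(i,j)\<in>{(i,j). i < j \<and> j < N}. var i * var j)"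

definition cells :: "nat list \<Rightarrow> (nat \<times> nat) set" where
  "cells lam = {(i,j). i < length lam \<and> j < lam ! i}"

definition ssyt :: "nat list \<Rightarrow> nat \<Rightarrow> ((nat \<times> nat) \<Rightarrow> nat) set" where
  "ssyt lam N = {T. (\<forall>c. c \<notin> cells lam \<longrightarrow> T c = 0)
      \<and> (\<forall>c\<in>cells lam. T c < N)
      \<and> (\<forall>i j. (i, Suc j) \<in> cells lam \<longrightarrow> T (i,j) \<le> T (i, Suc j))
      \<and> (\<forall>i j. (Suc i, j) \<in> cells lam \<longrightarrow> T (i,j) < T (Suc i, j))}"

definition content :: "nat list \<Rightarrow> ((nat \<times> nat) \<Rightarrow> nat) \<Rightarrow> (nat \<Rightarrow>\<^sub>0 nat)" where
  "content lam T = (\<Sum>c\<in>cells lam. Poly_Mapping.single (T c) 1)"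

definition schur :: "nat list \<Rightarrow> nat \<Rightarrow> ipoly" where
  "schur lam N = (\<Sum>T\<in>ssyt lam N. Poly_Mapping.single (content lam T) 1)"

text \<open>Riordan numbers: Motzkin paths of length n (steps -1,0,1), never below 0,
  ending at 0, with no flat step at height 0.\<close>

definition riordan_paths :: "nat \<Rightarrow> int list set" where
  "riordan_paths n = {s. length s = n \<and> set s \<subseteq> {-1, 0, 1}
      \<and> (\<forall>k\<le>n. sum_list (take k s) \<ge> 0)
      \<and> sum_list s = 0
      \<and> (\<forall>k<n. s ! k = 0 \<longrightarrow> sum_list (take k s) > 0)}"

definition riordan :: "nat \<Rightarrow> nat" where
  "riordan n = card (riordan_paths n)"

end

theory Submission
  imports Defs "HOL-Library.Multiset" "HOL-Library.List_Lexorder"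
begin


definition sb :: "nat list \<Rightarrow> nat list \<Rightarrow> bool" where
  "sb r s \<longleftrightarrow> length s \<le> length r \<and> (\<forall>j<length s. r!j < s!j)"

fun ssytL :: "nat list list \<Rightarrow> bool" where
  "ssytL [] = True"
| "ssytL (r # R) = (r \<noteq> [] \<and> sorted r \<and> (case R of [] \<Rightarrow> True | s # _ \<Rightarrow> sb r s) \<and> ssytL R)"

fun ins :: "nat \<Rightarrow> nat list list \<Rightarrow> nat list list" where
  "ins x [] = [[x]]"
| "ins x (r # R) = (case dropWhile (\<lambda>z. z \<le> x) r of
      [] \<Rightarrow> (r @ [x]) # R
    | y # b \<Rightarrow> (takeWhile (\<lambda>z. z \<le> x) r @ x # b) # ins y R)"

fun irow :: "nat \<Rightarrow> nat list list \<Rightarrow> nat" where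
  "irow x [] = 0"
| "irow x (r # R) = (case dropWhile (\<lambda>z. z \<le> x) r of
      [] \<Rightarrow> 0
    | y # b \<Rightarrow> Suc (irow y R))"

lemma dw_facts:
  assumes "dropWhile P r = y # b"
  shows "takeWhile P r @ x # b = r[length (takeWhile P r) := x]"
    and "r ! length (takeWhile P r) = y"
    and "length (takeWhile P r) < length r"
    and "\<not> P y"
proof -
  have r: "r = takeWhile P r @ y # b" using assms takeWhile_dropWhile_id by metis
  show "takeWhile P r @ x # b = r[length (takeWhile P r) := x]"
    by (subst (2) r) (simp add: list_update_append)
  show "r ! length (takeWhile P r) = y" by (subst r) (simp add: nth_append)
  show "length (takeWhile P r) < length r" by (subst (2) r) simp
  show "\<not> P y" using assms by (metis dropWhile_eq_Cons_conv)
qed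

lemma tw_le: "k < length (takeWhile P r) \<Longrightarrow> P (r ! k)"
  by (metis nth_mem set_takeWhileD takeWhile_nth)

lemma tw_bound: "j < length s \<Longrightarrow> \<not> P (s ! j) \<Longrightarrow> length (takeWhile P s) \<le> j"
  by (metis not_le_imp_less tw_le)

lemma sb_bump:
  assumes sr: "sorted r" and ss: "sorted s" and sb: "sb r s"
    and d: "dropWhile (\<lambda>z. z \<le> x) r = y # b"
  shows "sb (takeWhile (\<lambda>z. z \<le> x) r @ x # b)
     (case dropWhile (\<lambda>z. z \<le> y) s of [] \<Rightarrow> s @ [y]
       | y2 # b2 \<Rightarrow> takeWhile (\<lambda>z. z \<le> y) s @ y # b2)"
proof -
  define j where "j = length (takeWhile (\<lambda>z. z \<le> x) r)"
  note f = dw_facts(1)[OF d, of x, folded j_def] dw_facts(2-4)[OF d, folded j_def]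
  define r' where "r' = r[j := x]"
  have xy: "x < y" using f(4) by simp
  have lr': "length r' = length r" by (simp add: r'_def)
  have r'le: "r' ! k \<le> r ! k" if "k < length r" for k
    using that xy f(2) by (cases "k = j") (auto simp: r'_def)
  have r'x: "r' ! k \<le> x" if "k \<le> j" for k
  proof (cases "k = j")
    case True then show ?thesis using f(3) by (simp add: r'_def)
  next
    case False then have "k < j" using that by simp
    then show ?thesis using tw_le[of k "\<lambda>z. z \<le> x" r] False by (simp add: r'_def j_def)
  qed
  have jb: "\<not> j < length s \<or> y < s ! j"
    using sb f(2) f(3) unfolding sb_def by auto
  show ?thesis
  proof (cases "dropWhile (\<lambda>z. z \<le> y) s")
    case Nil
    then have allle: "\<forall>z\<in>set s. z \<le> y" by (simp add: dropWhile_eq_Nil_conv)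
    have "length s \<le> j" using jb allle by (meson leD not_le_imp_less nth_mem)
    moreover note dn = Nil
    ultimately show ?thesis unfolding dn list.case using sb f(3) r'le r'x xy
      unfolding sb_def f(1) r'_def[symmetric]
      apply (auto simp: nth_append lr')
      subgoal for k proof -
        assume a: "length s \<le> j" "\<forall>j<length s. r ! j < s ! j" "j < length r" "k < length s"
        then have "k < length r" by linarith
        then have "r' ! k \<le> r ! k" by (rule r'le)
        then show ?thesis using a by (meson le_less_trans)
      qed
      subgoal for k proof -
        assume a: "length s \<le> j" "\<not> k < length s" "k < Suc (length s)"
        then have "k \<le> j" by linarith
        then have "r' ! k \<le> x" by (rule r'x)
        then show ?thesis using xy by linarith
      qed
      done
  next
    case (Cons y2 b2)
    define j2 where "j2 = length (takeWhile (\<lambda>z. z \<le> y) s)"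
    note g = dw_facts(1)[OF Cons, of y, folded j2_def] dw_facts(2-4)[OF Cons, folded j2_def]
    have j2j: "j2 \<le> j"
    proof (cases "j < length s")
      case True then show ?thesis using jb tw_bound[of j s "\<lambda>z. z \<le> y"] by (simp add: j2_def)
    next
      case False then show ?thesis using g(3) by simp
    qed
    have "sb r' (s[j2 := y])" unfolding sb_def
    proof (intro conjI allI impI)
      show "length (s[j2 := y]) \<le> length r'" using sb lr' unfolding sb_def by simp
    next
      fix k assume k: "k < length (s[j2 := y])"
      show "r' ! k < s[j2 := y] ! k"
      proof (cases "k = j2")
        case True then show ?thesis using r'x[of j2] j2j xy k by simp
      next
        case False
        have "k < length r" using k sb unfolding sb_def by simp
        then have "r' ! k \<le> r ! k" by (rule r'le)
        moreover have "r ! k < s ! k" using k sb unfolding sb_def by simp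
        ultimately show ?thesis using False by simp
      qed
    qed
    then show ?thesis using Cons f(1) g(1) r'_def by simp
  qed
qed

lemma sb_snoc: "sb r s \<Longrightarrow> sb (r @ [x]) s"
  unfolding sb_def by (auto simp: nth_append)

lemma ins_ne: "ins x R \<noteq> []"
  by (cases R) (auto split: list.splits)

lemma sorted_bump:
  assumes "sorted r" "dropWhile (\<lambda>z. z \<le> x) r = y # b"
  shows "sorted (takeWhile (\<lambda>z. z \<le> x) r @ x # b)"
proof -
  have r: "r = takeWhile (\<lambda>z. z \<le> x) r @ y # b" using assms(2) takeWhile_dropWhile_id by metis
  have xy: "x < y" using dw_facts(4)[OF assms(2)] by simp
  have "sorted (takeWhile (\<lambda>z. z \<le> x) r @ y # b)" using assms(1) r by metis
  then show ?thesis using xy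
    by (auto simp: sorted_append dest: set_takeWhileD)
qed

lemma ins_ssyt: "ssytL R \<Longrightarrow> ssytL (ins x R)"
proof (induction R arbitrary: x)
  case Nil then show ?case by simp
next
  case (Cons r R)
  show ?case
  proof (cases "dropWhile (\<lambda>z. z \<le> x) r")
    case Nil
    then have allle: "\<forall>z\<in>set r. z \<le> x" by (simp add: dropWhile_eq_Nil_conv)
    have e: "ins x (r # R) = (r @ [x]) # R" by (simp only: ins.simps Nil list.case)
    have s1: "sorted (r @ [x])" using allle Cons.prems by (simp add: sorted_append)
    have s2: "case R of [] \<Rightarrow> True | s # _ \<Rightarrow> sb (r @ [x]) s"
      using Cons.prems sb_snoc by (cases R) auto
    show ?thesis unfolding e using s1 s2 Cons.prems by simp
  next
    case (Cons y b)
    have IH: "ssytL (ins y R)" using Cons.IH Cons.prems by simp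
    have sr: "sorted (takeWhile (\<lambda>z. z \<le> x) r @ x # b)"
      using sorted_bump[OF _ Cons] Cons.prems by simp
    have sbb: "case ins y R of [] \<Rightarrow> True | s # _ \<Rightarrow> sb (takeWhile (\<lambda>z. z \<le> x) r @ x # b) s"
    proof (cases R)
      case Nil
      have "takeWhile (\<lambda>z. z \<le> x) r @ x # b \<noteq> []" by simp
      moreover have "(takeWhile (\<lambda>z. z \<le> x) r @ x # b) ! 0 \<le> x"
        by (cases "takeWhile (\<lambda>z. z \<le> x) r") (auto dest: set_takeWhileD[of _ "\<lambda>z. z \<le> x"] simp: nth_Cons_0 , metis list.set_intros(1) set_takeWhileD)
      ultimately show ?thesis using Nil dw_facts(4)[OF Cons] by (simp add: sb_def)
    next
      case (Cons s R2)
      have "ins y R = (case dropWhile (\<lambda>z. z \<le> y) s of [] \<Rightarrow> s @ [y]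
       | y2 # b2 \<Rightarrow> takeWhile (\<lambda>z. z \<le> y) s @ y # b2) # (case dropWhile (\<lambda>z. z \<le> y) s of [] \<Rightarrow> R2
       | y2 # b2 \<Rightarrow> ins y2 R2)"
        unfolding Cons by (cases "dropWhile (\<lambda>z. z \<le> y) s"; simp only: ins.simps list.case)
      moreover have "sb (takeWhile (\<lambda>z. z \<le> x) r @ x # b) (case dropWhile (\<lambda>z. z \<le> y) s of [] \<Rightarrow> s @ [y]
       | y2 # b2 \<Rightarrow> takeWhile (\<lambda>z. z \<le> y) s @ y # b2)"
        apply (rule sb_bump[OF _ _ _ \<open>dropWhile (\<lambda>z. z \<le> x) r = y # b\<close>])
        using \<open>ssytL (r # R)\<close> Cons by auto
      ultimately show ?thesis by simp
    qed
    have e: "ins x (r # R) = (takeWhile (\<lambda>z. z \<le> x) r @ x # b) # ins y R" using Cons by simp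
    show ?thesis unfolding e using IH sr sbb by (simp split: list.split)
  qed
qed


definition add_box :: "nat list \<Rightarrow> nat \<Rightarrow> nat list" where
  "add_box mu r = (if r < length mu then mu[r := Suc (mu!r)] else mu @ [1])"

lemma add_box_0: "add_box (l # mu) 0 = Suc l # mu"
  by (simp add: add_box_def)

lemma add_box_Suc: "add_box (l # mu) (Suc k) = l # add_box mu k"
  by (simp add: add_box_def)

lemma ins_Nil_case: "dropWhile (\<lambda>z. z \<le> x) r = [] \<Longrightarrow> ins x (r # R) = (r @ [x]) # R"
  by (simp only: ins.simps list.case)

lemma ins_Cons_case: "dropWhile (\<lambda>z. z \<le> x) r = y # b \<Longrightarrow>
   ins x (r # R) = (takeWhile (\<lambda>z. z \<le> x) r @ x # b) # ins y R"
  by (simp only: ins.simps list.case)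

lemma irow_Nil_case: "dropWhile (\<lambda>z. z \<le> x) r = [] \<Longrightarrow> irow x (r # R) = 0"
  by (simp only: irow.simps list.case)

lemma irow_Cons_case: "dropWhile (\<lambda>z. z \<le> x) r = y # b \<Longrightarrow>
   irow x (r # R) = Suc (irow y R)"
  by (simp only: irow.simps list.case)

lemma ins_shape: "map length (ins x R) = add_box (map length R) (irow x R) \<and> irow x R \<le> length R"
proof (induction R arbitrary: x)
  case Nil then show ?case by (simp add: add_box_def)
next
  case (Cons r R)
  show ?case
  proof (cases "dropWhile (\<lambda>z. z \<le> x) r")
    case Nil
    then show ?thesis using ins_Nil_case[OF Nil] irow_Nil_case[OF Nil] by (simp add: add_box_0)
  next
    case (Cons y b)
    have r: "r = takeWhile (\<lambda>z. z \<le> x) r @ y # b" using Cons takeWhile_dropWhile_id by metis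
    have "length (takeWhile (\<lambda>z. z \<le> x) r @ x # b) = length r" by (subst (2) r) simp
    then show ?thesis using ins_Cons_case[OF Cons] irow_Cons_case[OF Cons] Cons.IH[of y]
      by (simp add: add_box_Suc)
  qed
qed

lemma ins_content: "mset (concat (ins x R)) = add_mset x (mset (concat R))"
proof (induction R arbitrary: x)
  case Nil then show ?case by simp
next
  case (Cons r R)
  show ?case
  proof (cases "dropWhile (\<lambda>z. z \<le> x) r")
    case Nil
    then show ?thesis using ins_Nil_case[OF Nil] by simp
  next
    case (Cons y b)
    have r: "r = takeWhile (\<lambda>z. z \<le> x) r @ y # b" using Cons takeWhile_dropWhile_id by metis
    have "mset (takeWhile (\<lambda>z. z \<le> x) r @ x # b) + {#y#} = mset r + {#x#}"
      by (subst (2) r) simp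
    then show ?thesis using ins_Cons_case[OF Cons] Cons.IH[of y] by simp
  qed
qed

lemma bump_lt: "x' < x \<Longrightarrow> irow x R < irow x' (ins x R)"
proof (induction R arbitrary: x x')
  case Nil
  have "dropWhile (\<lambda>z. z \<le> x') [x] = [x]" using Nil by simp
  then show ?case by (simp add: irow_Cons_case)
next
  case (Cons r R)
  note IH = Cons.IH and prems = Cons.prems
  show ?case
  proof (cases "dropWhile (\<lambda>z. z \<le> x) r")
    case Nil
    obtain y' b' where "dropWhile (\<lambda>z. z \<le> x') (r @ [x]) = y' # b'"
      using Cons.prems by (cases "dropWhile (\<lambda>z. z \<le> x') (r @ [x])") (auto simp: dropWhile_eq_Nil_conv)
    then show ?thesis using ins_Nil_case[OF Nil] irow_Nil_case[OF Nil] irow_Cons_case by simp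
  next
    case (Cons y b)
    define a where "a = takeWhile (\<lambda>z. z \<le> x) r"
    have ale: "\<forall>z\<in>set a. z \<le> x" unfolding a_def by (auto dest: set_takeWhileD)
    obtain y' b' where d': "dropWhile (\<lambda>z. z \<le> x') (a @ x # b) = y' # b'"
      using prems by (cases "dropWhile (\<lambda>z. z \<le> x') (a @ x # b)") (auto simp: dropWhile_eq_Nil_conv)
    have "y' \<in> set (a @ x # b)" using d' by (metis list.set_intros(1) set_dropWhileD)
    have "y' \<le> x"
    proof (cases "\<forall>z\<in>set a. z \<le> x'")
      case True
      then have "dropWhile (\<lambda>z. z \<le> x') (a @ x # b) = x # b" using prems by simp
      then show ?thesis using d' by simp
    next
      case False
      then obtain z where z: "z \<in> set a" "\<not> z \<le> x'" by blast
      have "dropWhile (\<lambda>z. z \<le> x') (a @ x # b) = dropWhile (\<lambda>z. z \<le> x') a @ x # b"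
        by (rule dropWhile_append1[where P="\<lambda>z. z \<le> x'", OF z])
      moreover have "dropWhile (\<lambda>z. z \<le> x') a \<noteq> []" using False by simp
      ultimately obtain c d where cd: "dropWhile (\<lambda>z. z \<le> x') a = c # d"
        "dropWhile (\<lambda>z. z \<le> x') (a @ x # b) = c # d @ x # b"
        by (cases "dropWhile (\<lambda>z. z \<le> x') a") auto
      then have "y' = c" using d' by simp
      moreover have "c \<in> set a" using cd(1) by (metis list.set_intros(1) set_dropWhileD)
      ultimately have "y' \<in> set a" by simp
      then show ?thesis using ale by simp
    qed
    then have "y' < y" using dw_facts(4)[OF Cons] by simp
    then have "irow y R < irow y' (ins y R)" using IH by simp
    then show ?thesis using ins_Cons_case[OF Cons] irow_Cons_case[OF Cons] irow_Cons_case[OF d'[unfolded a_def]]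
      by (simp add: a_def)
  qed
qed

lemma bump_ge: "ssytL R \<Longrightarrow> x \<le> x' \<Longrightarrow> irow x' (ins x R) \<le> irow x R"
proof (induction R arbitrary: x x')
  case Nil
  then show ?case by (simp add: irow_Nil_case)
next
  case (Cons r R)
  show ?case
  proof (cases "dropWhile (\<lambda>z. z \<le> x) r")
    case Nil
    then have "\<forall>z\<in>set r. z \<le> x" by (simp add: dropWhile_eq_Nil_conv)
    then have "dropWhile (\<lambda>z. z \<le> x') (r @ [x]) = []" using Cons.prems by auto
    then show ?thesis using ins_Nil_case[OF Nil] irow_Nil_case[OF Nil] irow_Nil_case by simp
  next
    case (Cons y b)
    define a where "a = takeWhile (\<lambda>z. z \<le> x) r"
    have r: "r = a @ y # b" unfolding a_def using Cons takeWhile_dropWhile_id by metis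
    have ale: "\<forall>z\<in>set a. z \<le> x" unfolding a_def by (auto dest: set_takeWhileD)
    have sr: "sorted r" using Cons.prems by simp
    then have bge: "\<forall>z\<in>set b. y \<le> z" by (subst (asm) r) (simp add: sorted_append)
    have e: "ins x (r # R) = (a @ x # b) # ins y R" using ins_Cons_case[OF Cons] a_def by simp
    show ?thesis
    proof (cases "dropWhile (\<lambda>z. z \<le> x') (a @ x # b)")
      case Nil
      then show ?thesis unfolding e using irow_Nil_case by simp
    next
      case (Cons y' b')
      note d2 = Cons
      have y1: "y' \<in> set (a @ x # b)" using d2 by (metis list.set_intros(1) set_dropWhileD)
      have y2: "\<not> y' \<le> x'" using dw_facts(4)[OF d2] by simp
      have "y' \<notin> set a" using y2 ale \<open>x \<le> x'\<close> by auto
      moreover have "y' \<noteq> x" using y2 \<open>x \<le> x'\<close> by auto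
      ultimately have "y' \<in> set b" using y1 by simp
      then have "y \<le> y'" using bge by simp
      then have "irow y' (ins y R) \<le> irow y R" using Cons.IH \<open>ssytL (r # R)\<close> by simp
      then show ?thesis unfolding e using irow_Cons_case[OF Cons] irow_Cons_case[OF \<open>dropWhile (\<lambda>z. z \<le> x) r = y # b\<close>]
        by simp
    qed
  qed
qed


definition unbump :: "nat \<Rightarrow> nat list \<Rightarrow> nat list \<times> nat" where
  "unbump y s = (butlast (takeWhile (\<lambda>z. z < y) s) @ y # dropWhile (\<lambda>z. z < y) s,
                 last (takeWhile (\<lambda>z. z < y) s))"

fun del :: "nat \<Rightarrow> nat list list \<Rightarrow> nat list list \<times> nat" where
  "del r [] = ([], 0)"
| "del 0 (s # R) = ((if butlast s = [] then R else butlast s # R), last s)"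
| "del (Suc r) (s # R) = (case del r R of (R', y) \<Rightarrow> (fst (unbump y s) # R', snd (unbump y s)))"

lemma tw_take:
  assumes "n \<le> length xs" "\<forall>i<n. P (xs!i)" "n < length xs \<longrightarrow> \<not> P (xs!n)"
  shows "takeWhile P xs = take n xs \<and> dropWhile P xs = drop n xs"
proof -
  have t: "takeWhile P xs = take n xs"
    by (rule takeWhile_eq_take_P_nth) (use assms in auto)
  moreover have "length (take n xs) = n" using assms(1) by simp
  ultimately show ?thesis by (simp add: dropWhile_eq_drop)
qed

lemma ins_at:
  assumes "j < length r" "x < r!j" "\<forall>k<j. r!k \<le> x"
  shows "ins x (r # R) = r[j := x] # ins (r!j) R \<and> irow x (r # R) = Suc (irow (r!j) R)"
proof -
  have tw: "takeWhile (\<lambda>z. z \<le> x) r = take j r \<and> dropWhile (\<lambda>z. z \<le> x) r = drop j r"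
    by (rule tw_take) (use assms in auto)
  have d: "dropWhile (\<lambda>z. z \<le> x) r = r!j # drop (Suc j) r"
    using tw Cons_nth_drop_Suc[OF assms(1)] by simp
  show ?thesis using ins_Cons_case[OF d] irow_Cons_case[OF d] tw upd_conv_take_nth_drop[OF assms(1)]
    by simp
qed

lemma ins_end:
  assumes "\<forall>z\<in>set r. z \<le> x"
  shows "ins x (r # R) = (r @ [x]) # R \<and> irow x (r # R) = 0"
proof -
  have d: "dropWhile (\<lambda>z. z \<le> x) r = []" using assms by simp
  show ?thesis using ins_Nil_case[OF d] irow_Nil_case[OF d] by simp
qed

lemma ins_pos:
  fixes r :: "nat list"
  shows "(\<forall>z\<in>set r. z \<le> x) \<or> (\<exists>j<length r. x < r!j \<and> (\<forall>k<j. r!k \<le> x))"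
proof (cases "\<forall>z\<in>set r. z \<le> x")
  case False
  define j where "j = length (takeWhile (\<lambda>z. z \<le> x) r)"
  obtain y b where d: "dropWhile (\<lambda>z. z \<le> x) r = y # b"
    using False by (cases "dropWhile (\<lambda>z. z \<le> x) r") auto
  have "j < length r" using dw_facts(3)[OF d] unfolding j_def .
  moreover have "\<not> r!j \<le> x" unfolding j_def using calculation j_def nth_length_takeWhile by blast
  moreover have "\<forall>k<j. r!k \<le> x" unfolding j_def using tw_le[of _ "\<lambda>z. z \<le> x" r] by blast
  ultimately have "\<exists>j<length r. x < r!j \<and> (\<forall>k<j. r!k \<le> x)" by (intro exI[of _ j]) auto
  then show ?thesis by blast
qed simp

lemma unbump_at:
  assumes "sorted s" "j0 < length s" "s!j0 < y" "\<forall>k. j0 < k \<and> k < length s \<longrightarrow> y \<le> s!k"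
  shows "unbump y s = (s[j0 := y], s!j0)"
proof -
  have tw: "takeWhile (\<lambda>z. z < y) s = take (Suc j0) s \<and> dropWhile (\<lambda>z. z < y) s = drop (Suc j0) s"
  proof (rule tw_take)
    show "Suc j0 \<le> length s" using assms by simp
    show "\<forall>i<Suc j0. s ! i < y"
      using assms(1,2,3) by (meson less_Suc_eq_le order.strict_trans1 sorted_nth_mono)
    show "Suc j0 < length s \<longrightarrow> \<not> s ! Suc j0 < y" using assms(4) by auto
  qed
  have "take (Suc j0) s = take j0 s @ [s!j0]" using assms(2) by (rule take_Suc_conv_app_nth)
  then show ?thesis unfolding unbump_def using tw upd_conv_take_nth_drop[OF assms(2)] by simp
qed

lemma sorted_upd:
  assumes "sorted s" "j < length s" "\<forall>k<j. s!k \<le> v" "\<forall>k. j < k \<and> k < length s \<longrightarrow> v \<le> s!k"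
  shows "sorted (s[j := v])"
  unfolding sorted_iff_nth_mono_less
proof (intro allI impI)
  fix i i' assume a: "i < i'" "i' < length (s[j := v])"
  show "s[j := v] ! i \<le> s[j := v] ! i'"
  proof (cases "i = j")
    case True then show ?thesis using a assms by auto
  next
    case False
    show ?thesis
    proof (cases "i' = j")
      case True then show ?thesis using a assms False by auto
    next
      case False2: False
      then show ?thesis using a assms False by (simp add: sorted_iff_nth_mono_less)
    qed
  qed
qed

lemma del_ins: "ssytL R \<Longrightarrow> del (irow x R) (ins x R) = (R, x)"
proof (induction R arbitrary: x)
  case Nil then show ?case by simp
next
  case (Cons r R)
  note IH = Cons.IH and prems = Cons.prems
  have sr: "sorted r" and rne: "r \<noteq> []" and sR: "ssytL R" using prems by auto
  from ins_pos[of r x] show ?case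
  proof
    assume a: "\<forall>z\<in>set r. z \<le> x"
    show ?thesis using ins_end[OF a, of R] rne by simp
  next
    assume "\<exists>j<length r. x < r!j \<and> (\<forall>k<j. r!k \<le> x)"
    then obtain j where j: "j < length r" "x < r!j" "\<forall>k<j. r!k \<le> x" by blast
    note e = ins_at[OF j, of R]
    have sr': "sorted (r[j := x])"
    proof (rule sorted_upd[OF sr j(1)])
      show "\<forall>k<j. r ! k \<le> x" using j by simp
      show "\<forall>k. j < k \<and> k < length r \<longrightarrow> x \<le> r ! k"
        using j(2) sorted_nth_mono[OF sr, of j] by (meson less_imp_le_nat order.strict_trans2 less_imp_le)
    qed
    have ub: "unbump (r!j) (r[j := x]) = ((r[j := x])[j := r!j], (r[j := x]) ! j)"
      by (rule unbump_at[OF sr']) (use j sr in \<open>auto intro: sorted_nth_mono\<close>)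
    have "del (irow (r!j) R) (ins (r!j) R) = (R, r!j)" using IH sR by simp
    then show ?thesis using e ub j by simp
  qed
qed

definition corner :: "nat \<Rightarrow> nat list list \<Rightarrow> bool" where
  "corner r R \<longleftrightarrow> r < length R \<and> (Suc r < length R \<longrightarrow> length (R ! Suc r) < length (R ! r))"

definition toprel :: "nat list list \<Rightarrow> nat list list \<Rightarrow> nat \<Rightarrow> bool" where
  "toprel R' R x \<longleftrightarrow> (\<exists>j < length (hd R'). x = hd R' ! j
     \<and> (\<forall>k. j < k \<and> k < length (hd R') \<longrightarrow> x < hd R' ! k)
     \<and> (R \<noteq> [] \<longrightarrow> length (hd R) \<le> length (hd R')
          \<and> (\<forall>k<length (hd R). k \<noteq> j \<longrightarrow> hd R ! k = hd R' ! k)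
          \<and> (j < length (hd R) \<longrightarrow> x < hd R ! j)))"


lemma ins_del:
  "ssytL R' \<Longrightarrow> corner r R' \<Longrightarrow> del r R' = (R, x) \<Longrightarrow>
    ssytL R \<and> ins x R = R' \<and> irow x R = r \<and> toprel R' R x"
proof (induction R' arbitrary: r R x)
  case Nil then show ?case by (simp add: corner_def)
next
  case (Cons s Rr)
  note IH = Cons.IH and prems = Cons.prems
  have ss: "sorted s" and sne: "s \<noteq> []" and sRr: "ssytL Rr"
    and sbr: "case Rr of [] \<Rightarrow> True | t # _ \<Rightarrow> sb s t" using prems(1) by auto
  show ?case
  proof (cases r)
    case 0
    have x: "x = last s" and R: "R = (if butlast s = [] then Rr else butlast s # Rr)"
      using prems(3) 0 by auto
    show ?thesis
    proof (cases "butlast s = []")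
      case True
      then have s1: "s = [x]" using sne x by (metis append_butlast_last_id append_Nil)
      have "Rr = []"
      proof (rule ccontr)
        assume "Rr \<noteq> []"
        then obtain t Rt where t: "Rr = t # Rt" by (cases Rr) auto
        then have "length t < 1" using prems(2) 0 s1 unfolding corner_def by simp
        then show False using sRr t by simp
      qed
      then show ?thesis using R True s1 0 by (simp add: toprel_def)
    next
      case False
      then have R2: "R = butlast s # Rr" using R by simp
      have sbl: "sorted (butlast s)" using ss by (simp add: sorted_butlast)
      have c2: "case Rr of [] \<Rightarrow> True | t # _ \<Rightarrow> sb (butlast s) t"
      proof (cases Rr)
        case (Cons t Rt)
        have "length t < length s" using prems(2) 0 Cons unfolding corner_def by simp
        then show ?thesis using sbr Cons by (auto simp: sb_def nth_butlast)
      qed simp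
      have s1: "ssytL R" using R2 False sbl c2 sRr by simp
      have le: "\<forall>z\<in>set (butlast s). z \<le> x"
      proof
        fix z assume "z \<in> set (butlast s)"
        then obtain i where i: "i < length (butlast s)" "z = butlast s ! i" by (metis in_set_conv_nth)
        then have "z = s ! i" by (simp add: nth_butlast)
        moreover have "x = s ! (length s - 1)" using x sne by (simp add: last_conv_nth)
        moreover have "i \<le> length s - 1" "length s - 1 < length s" using i sne by auto
        ultimately show "z \<le> x" using ss by (simp add: sorted_nth_mono)
      qed
      have s2: "ins x R = s # Rr \<and> irow x R = 0"
        using ins_end[OF le, of Rr] R2 x sne by simp
      have s3: "toprel (s # Rr) R x" unfolding toprel_def R2
        apply (rule exI[of _ "length s - 1"])
        using sne x by (auto simp: last_conv_nth nth_butlast)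
      show ?thesis using s1 s2 s3 0 by simp
    qed
  next
    case (Suc r')
    obtain R1 y where d1: "del r' Rr = (R1, y)" by (cases "del r' Rr") auto
    have RX: "R = fst (unbump y s) # R1" "x = snd (unbump y s)"
      using prems(3) Suc d1 by auto
    have cr: "corner r' Rr" using prems(2) Suc unfolding corner_def by auto
    then obtain t Rt where t: "Rr = t # Rt" unfolding corner_def by (cases Rr) auto
    have ih: "ssytL R1 \<and> ins y R1 = Rr \<and> irow y R1 = r' \<and> toprel Rr R1 y"
      using IH[OF sRr cr d1] .
    then obtain j where j: "j < length t" "y = t ! j" "\<forall>k. j < k \<and> k < length t \<longrightarrow> y < t ! k"
      and jR1: "R1 \<noteq> [] \<longrightarrow> length (hd R1) \<le> length t
          \<and> (\<forall>k<length (hd R1). k \<noteq> j \<longrightarrow> hd R1 ! k = t ! k)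
          \<and> (j < length (hd R1) \<longrightarrow> y < hd R1 ! j)"
      unfolding toprel_def t by auto
    have sbst: "sb s t" using sbr t by simp
    then have jls: "j < length s" and sjy: "s ! j < y" using j unfolding sb_def by auto
    define L where "L = length (takeWhile (\<lambda>z. z < y) s)"
    have jL: "j < L"
    proof (rule ccontr)
      assume "\<not> j < L"
      then have "L < length s" using jls by simp
      then have "\<not> s ! L < y" unfolding L_def using nth_length_takeWhile by blast
      moreover have "s ! L \<le> s ! j" using \<open>\<not> j < L\<close> jls ss by (simp add: sorted_nth_mono)
      ultimately show False using sjy by simp
    qed
    define j0 where "j0 = L - 1"
    have Lle: "L \<le> length s" unfolding L_def by (rule length_takeWhile_le)
    have j0: "j \<le> j0" "j0 < length s" "Suc j0 = L" using jL Lle unfolding j0_def by auto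
    have sj0: "s ! j0 < y" using tw_le[of j0 "\<lambda>z. z < y" s] j0 unfolding L_def by simp
    have after: "\<forall>k. j0 < k \<and> k < length s \<longrightarrow> y \<le> s ! k"
    proof (intro allI impI)
      fix k assume k: "j0 < k \<and> k < length s"
      then have "L < length s" "L \<le> k" using j0 by auto
      then have "\<not> s ! L < y" unfolding L_def using nth_length_takeWhile by blast
      moreover have "s ! L \<le> s ! k" using \<open>L \<le> k\<close> k ss by (simp add: sorted_nth_mono)
      ultimately show "y \<le> s ! k" by simp
    qed
    have before: "\<forall>k<j0. s ! k \<le> s ! j0" using ss j0 by (simp add: sorted_nth_mono)
    have ub: "unbump y s = (s[j0 := y], s ! j0)" by (rule unbump_at[OF ss j0(2) sj0 after])
    define s' where "s' = s[j0 := y]"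
    have R': "R = s' # R1" "x = s ! j0" using RX ub s'_def by auto
    have sorted': "sorted s'" unfolding s'_def
      by (rule sorted_upd[OF ss j0(2)]) (use before sj0 after in auto)
    have sb': "case R1 of [] \<Rightarrow> True | t1 # _ \<Rightarrow> sb s' t1"
    proof (cases R1)
      case (Cons t1 R1')
      have A: "length t1 \<le> length t" "\<forall>k<length t1. k \<noteq> j \<longrightarrow> t1 ! k = t ! k"
        "j < length t1 \<longrightarrow> y < t1 ! j" using jR1 Cons by auto
      have "sb s' t1" unfolding sb_def
      proof (intro conjI allI impI)
        show "length t1 \<le> length s'" using A(1) sbst unfolding sb_def s'_def by simp
      next
        fix k assume k: "k < length t1"
        show "s' ! k < t1 ! k"
        proof (cases "k = j0")
          case True
          then have "s' ! k = y" unfolding s'_def using j0 by simp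
          show ?thesis
          proof (cases "j0 = j")
            case True then show ?thesis using A(3) k \<open>s' ! k = y\<close> \<open>k = j0\<close> by simp
          next
            case False
            then have "j < j0" using j0 by simp
            then have "y < t ! j0" using j(3) k True A(1) by auto
            then show ?thesis using A(2) k True False \<open>s' ! k = y\<close> by simp
          qed
        next
          case False
          then have "s' ! k = s ! k" unfolding s'_def by simp
          show ?thesis
          proof (cases "k = j")
            case True then show ?thesis using A(3) k sjy \<open>s' ! k = s ! k\<close> by simp
          next
            case False2: False
            have "s ! k < t ! k" using sbst k A(1) unfolding sb_def by simp
            then show ?thesis using A(2) k False2 \<open>s' ! k = s ! k\<close> by simp
          qed
        qed
      qed
      then show ?thesis using Cons by simp
    qed simp
    have s1: "ssytL R" using R'(1) sorted' sb' ih sne unfolding s'_def by simp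
    have ia: "ins x R = s'[j0 := s ! j0] # ins (s' ! j0) R1 \<and> irow x R = Suc (irow (s' ! j0) R1)"
      unfolding R' by (rule ins_at) (use j0 sj0 before in \<open>auto simp: s'_def\<close>)
    have s'j0: "s' ! j0 = y" "s'[j0 := s ! j0] = s" unfolding s'_def using j0 by auto
    have s2: "ins x R = s # Rr \<and> irow x R = r" using ia s'j0 ih Suc by simp
    have s3: "toprel (s # Rr) R x" unfolding toprel_def R'
      apply (rule exI[of _ j0])
      using j0 sj0 after unfolding s'_def by (auto simp: less_le_trans)
    show ?thesis using s1 s2 s3 by simp
  qed
qed


definition pt :: "nat list \<Rightarrow> nat \<Rightarrow> nat" where
  "pt l i = (if i < length l then l ! i else 0)"

lemma part_cons: "is_partition (l # ls) \<longleftrightarrow> (\<forall>y\<in>set ls. y \<le> l) \<and> 0 < l \<and> is_partition ls"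
  unfolding is_partition_def by auto

lemma part_mono: "is_partition l \<Longrightarrow> i \<le> i' \<Longrightarrow> pt l i' \<le> pt l i"
  unfolding is_partition_def pt_def
  by (cases "i = i'") (auto simp: sorted_wrt_iff_nth_less)

lemma part_pos: "is_partition l \<Longrightarrow> i < length l \<Longrightarrow> 0 < l ! i"
  unfolding is_partition_def by (metis gr0I nth_mem)

lemma part_eq:
  assumes "is_partition a" "is_partition b" "\<forall>k. pt a k = pt b k"
  shows "a = b"
proof -
  have "\<not> length a < length b"
  proof
    assume "length a < length b"
    then have "pt b (length a) > 0" using part_pos[OF assms(2)] by (simp add: pt_def)
    moreover have "pt a (length a) = 0" by (simp add: pt_def)
    ultimately show False using assms(3)[rule_format, of "length a"] by simp
  qed
  moreover have "\<not> length b < length a"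
  proof
    assume "length b < length a"
    then have "pt a (length b) > 0" using part_pos[OF assms(1)] by (simp add: pt_def)
    moreover have "pt b (length b) = 0" by (simp add: pt_def)
    ultimately show False using assms(3)[rule_format, of "length b"] by simp
  qed
  ultimately have l: "length a = length b" by simp
  show ?thesis
  proof (rule nth_equalityI[OF l])
    fix i assume "i < length a" then show "a ! i = b ! i" using assms(3)[rule_format, of i] l by (simp add: pt_def)
  qed
qed

lemma sum_pt: "length l \<le> K \<Longrightarrow> sum_list l = (\<Sum>k<K. pt l k)"
proof -
  assume K: "length l \<le> K"
  have "sum_list l = (\<Sum>k<length l. pt l k)"
    by (simp add: sum_list_sum_nth pt_def atLeast0LessThan)
  also have "\<dots> = (\<Sum>k<K. pt l k)"
    by (rule sum.mono_neutral_left) (use K in \<open>auto simp: pt_def\<close>)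
  finally show ?thesis .
qed

lemma pt_add_box: "r \<le> length mu \<Longrightarrow> pt (add_box mu r) k = pt mu k + (if k = r then 1 else 0)"
  unfolding add_box_def pt_def by (auto simp: nth_append)

lemma length_add_box: "length (add_box mu r) \<le> Suc (length mu)"
  unfolding add_box_def by auto

lemma sum_add_box: "sum_list (add_box mu r) = Suc (sum_list mu)"
proof (induction mu arbitrary: r)
  case Nil then show ?case by (simp add: add_box_def)
next
  case (Cons l mu) then show ?case by (cases r) (auto simp: add_box_0 add_box_Suc)
qed

lemma ssytL_partition: "ssytL R \<Longrightarrow> is_partition (map length R)"
proof (induction R)
  case Nil then show ?case by (simp add: is_partition_def)
next
  case (Cons r R)
  have ip: "is_partition (map length R)" using Cons by simp
  have "\<forall>y\<in>set (map length R). y \<le> length r"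
  proof (cases R)
    case (Cons s R')
    have "length s \<le> length r" using \<open>ssytL (r # R)\<close> Cons by (simp add: sb_def)
    moreover have "\<forall>y\<in>set (map length R'). y \<le> length s" using ip Cons by (simp add: part_cons)
    ultimately show ?thesis using Cons by auto
  qed simp
  then show ?case using ip Cons.prems by (simp add: part_cons)
qed

definition V2 :: "nat list \<Rightarrow> nat list set" where
  "V2 mu = {lam. is_partition lam \<and> (\<forall>i. pt mu i \<le> pt lam i \<and> pt lam i \<le> Suc (pt mu i))
               \<and> sum_list lam = sum_list mu + 2}"

definition bnd :: "nat \<Rightarrow> nat list list \<Rightarrow> bool" where
  "bnd N R \<longleftrightarrow> (\<forall>x\<in>set (concat R). x < N)"

definition SSL :: "nat \<Rightarrow> nat list \<Rightarrow> nat list list set" where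
  "SSL N lam = {R. ssytL R \<and> bnd N R \<and> map length R = lam}"

lemma set_ins: "set (concat (ins x R)) = insert x (set (concat R))"
  using arg_cong[OF ins_content[of x R], of set_mset] by simp

lemma part_len_le: "is_partition l \<Longrightarrow> length l \<le> sum_list l"
proof (induction l)
  case (Cons a l) then show ?case by (simp add: part_cons)
qed simp

lemma part_elem_le: "x \<in> set l \<Longrightarrow> x \<le> sum_list (l::nat list)"
  by (simp add: member_le_sum_list)

lemma finite_partitions: "finite (partitions_of d)"
proof -
  have "partitions_of d \<subseteq> {xs. set xs \<subseteq> {..d} \<and> length xs \<le> d}"
    unfolding partitions_of_def using part_len_le part_elem_le by fastforce
  moreover have "finite {xs. set xs \<subseteq> {..d} \<and> length xs \<le> d}"
    by (rule finite_lists_length_le) simp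
  ultimately show ?thesis by (rule finite_subset)
qed

lemma V2_sub: "V2 mu \<subseteq> partitions_of (sum_list mu + 2)"
  unfolding V2_def partitions_of_def by auto

lemma finite_V2: "finite (V2 mu)"
  using finite_subset[OF V2_sub finite_partitions] .

lemma finite_SSL: "finite (SSL N lam)"
proof -
  define K where "K = sum_list lam + length lam"
  have "SSL N lam \<subseteq> {R. set R \<subseteq> {r. set r \<subseteq> {..<N} \<and> length r \<le> K} \<and> length R \<le> K}"
  proof
    fix R assume R: "R \<in> SSL N lam"
    then have "map length R = lam" "bnd N R" by (auto simp: SSL_def)
    moreover have "\<forall>r\<in>set R. length r \<le> K"
    proof
      fix r assume "r \<in> set R"
      then have "length r \<in> set lam" using \<open>map length R = lam\<close> by auto
      then show "length r \<le> K" unfolding K_def using part_elem_le by fastforce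
    qed
    ultimately show "R \<in> {R. set R \<subseteq> {r. set r \<subseteq> {..<N} \<and> length r \<le> K} \<and> length R \<le> K}"
      unfolding bnd_def K_def by auto
  qed
  moreover have "finite {R. set R \<subseteq> {r. set r \<subseteq> {..<N} \<and> length r \<le> K} \<and> length R \<le> K}"
    by (intro finite_lists_length_le) simp
  ultimately show ?thesis by (rule finite_subset)
qed


lemma two_ins:
  assumes R: "ssytL R" and ij: "i < j"
  shows "irow j R < irow i (ins j R)"
    and "\<forall>k. pt (map length (ins i (ins j R))) k = pt (map length R) k
            + (if k = irow j R then 1 else 0) + (if k = irow i (ins j R) then 1 else 0)"
proof -
  show lt: "irow j R < irow i (ins j R)" by (rule bump_lt[OF ij])
  have s1: "map length (ins j R) = add_box (map length R) (irow j R)" "irow j R \<le> length R"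
    using ins_shape by auto
  have s2: "map length (ins i (ins j R)) = add_box (map length (ins j R)) (irow i (ins j R))"
     "irow i (ins j R) \<le> length (ins j R)"
    using ins_shape by auto
  show "\<forall>k. pt (map length (ins i (ins j R))) k = pt (map length R) k
            + (if k = irow j R then 1 else 0) + (if k = irow i (ins j R) then 1 else 0)"
  proof
    fix k
    have "pt (map length (ins i (ins j R))) k = pt (map length (ins j R)) k + (if k = irow i (ins j R) then 1 else 0)"
      unfolding s2(1) by (rule pt_add_box) (use s2(2) in simp)
    also have "pt (map length (ins j R)) k = pt (map length R) k + (if k = irow j R then 1 else 0)"
      unfolding s1(1) by (rule pt_add_box) (use s1(2) in simp)
    finally show "pt (map length (ins i (ins j R))) k = pt (map length R) k
            + (if k = irow j R then 1 else 0) + (if k = irow i (ins j R) then 1 else 0)" .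
  qed
qed

lemma diffset:
  assumes "\<forall>k. pt lam k = pt mu k + (if k = r1 then 1 else 0) + (if k = r2 then 1 else 0)" "r1 < r2"
  shows "{k. pt lam k \<noteq> pt mu k} = {r1, r2}"
  using assms by auto

lemma dbl: "{a, b} = {c, d} \<Longrightarrow> a < b \<Longrightarrow> c < (d::nat) \<Longrightarrow> a = c \<and> b = d"
  by (auto simp: doubleton_eq_iff)

lemma pieri_into:
  assumes R: "R \<in> SSL N mu" and ij: "i < j" "j < N"
  shows "ins i (ins j R) \<in> {R'. ssytL R' \<and> bnd N R' \<and> map length R' \<in> V2 mu}"
proof -
  have sR: "ssytL R" "bnd N R" "map length R = mu" using R by (auto simp: SSL_def)
  let ?R' = "ins i (ins j R)"
  have a: "ssytL ?R'" using ins_ssyt sR by blast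
  have b: "bnd N ?R'" using sR(2) ij unfolding bnd_def set_ins by auto
  have p: "is_partition (map length ?R')" using ssytL_partition[OF a] .
  note t = two_ins[OF sR(1) ij(1)]
  have c: "\<forall>k. pt mu k \<le> pt (map length ?R') k \<and> pt (map length ?R') k \<le> Suc (pt mu k)"
    using t sR(3) by auto
  have "sum_list (map length ?R') = sum_list mu + 2"
  proof -
    have "map length ?R' = add_box (map length (ins j R)) (irow i (ins j R))"
      "map length (ins j R) = add_box (map length R) (irow j R)"
      using ins_shape by auto
    then show ?thesis using sum_add_box sR(3) by simp
  qed
  then show ?thesis using a b p c unfolding V2_def by auto
qed

lemma pieri_inj:
  assumes R: "R \<in> SSL N mu" "R2 \<in> SSL N mu" and ij: "i < j" "i2 < j2"
    and eq: "ins i (ins j R) = ins i2 (ins j2 R2)"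
  shows "R = R2 \<and> i = i2 \<and> j = j2"
proof -
  have sR: "ssytL R" "map length R = mu" "ssytL R2" "map length R2 = mu" using R by (auto simp: SSL_def)
  note t1 = two_ins[OF sR(1) ij(1)] and t2 = two_ins[OF sR(3) ij(2)]
  have d1: "{k. pt (map length (ins i (ins j R))) k \<noteq> pt mu k} = {irow j R, irow i (ins j R)}"
    by (rule diffset) (use t1 sR in auto)
  have d2: "{k. pt (map length (ins i (ins j R))) k \<noteq> pt mu k} = {irow j2 R2, irow i2 (ins j2 R2)}"
    unfolding eq by (rule diffset) (use t2 sR in auto)
  have e1: "irow j R = irow j2 R2" and e2: "irow i (ins j R) = irow i2 (ins j2 R2)"
    using dbl[OF d1[unfolded d2] t2(1) t1(1)] by auto
  have A: "del (irow i (ins j R)) (ins i (ins j R)) = (ins j R, i)"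
    by (rule del_ins) (use ins_ssyt sR in blast)
  have B: "del (irow i2 (ins j2 R2)) (ins i2 (ins j2 R2)) = (ins j2 R2, i2)"
    by (rule del_ins) (use ins_ssyt sR in blast)
  have "(ins j R, i) = (ins j2 R2, i2)" using A B unfolding e2 eq by (simp only:)
  then have f1: "ins j R = ins j2 R2" "i = i2" by simp_all
  have C: "del (irow j R) (ins j R) = (R, j)" by (rule del_ins) (use sR in blast)
  have D: "del (irow j2 R2) (ins j2 R2) = (R2, j2)" by (rule del_ins) (use sR in blast)
  have "(R, j) = (R2, j2)" using C D unfolding e1 f1 by (simp only:)
  then show ?thesis using f1 by simp
qed

lemma pieri_surj:
  assumes mu: "is_partition mu"
    and R': "ssytL R'" "bnd N R'" "map length R' \<in> V2 mu"
  shows "\<exists>R i j. R \<in> SSL N mu \<and> i < j \<and> j < N \<and> R' = ins i (ins j R)"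
proof -
  define lam where "lam = map length R'"
  have lamV: "is_partition lam" "\<forall>k. pt mu k \<le> pt lam k \<and> pt lam k \<le> Suc (pt mu k)"
    "sum_list lam = sum_list mu + 2"
    using R'(3) unfolding lam_def V2_def by auto
  define K where "K = length lam + length mu"
  define D where "D = {k. pt lam k \<noteq> pt mu k}"
  have DK: "D \<subseteq> {..<K}" unfolding D_def K_def pt_def by auto
  have "sum_list lam = (\<Sum>k<K. pt lam k)" "sum_list mu = (\<Sum>k<K. pt mu k)"
    by (rule sum_pt, simp add: K_def)+
  then have "(\<Sum>k<K. pt lam k) = (\<Sum>k<K. pt mu k) + 2" using lamV(3) by simp
  moreover have "(\<Sum>k<K. pt lam k) = (\<Sum>k<K. pt mu k + (if k \<in> D then 1 else 0))"
  proof (rule sum.cong[OF refl])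
    fix k
    have "pt mu k \<le> pt lam k" "pt lam k \<le> Suc (pt mu k)" using lamV(2) by auto
    then show "pt lam k = pt mu k + (if k \<in> D then 1 else 0)" unfolding D_def by auto
  qed
  moreover have "(\<Sum>k<K. (if k \<in> D then 1 else 0)::nat) = card D"
    using DK by (simp add: sum.If_cases Int_absorb1)
  ultimately have "card D = 2" by (simp add: sum.distrib)
  then obtain a b where ab: "D = {a, b}" "a \<noteq> b" by (auto simp: card_2_iff)
  define r1 where "r1 = min a b"
  define r2 where "r2 = max a b"
  have D: "D = {r1, r2}" "r1 < r2" using ab unfolding r1_def r2_def by (auto simp: min_def max_def)
  have ptl: "\<forall>k. pt lam k = pt mu k + (if k = r1 then 1 else 0) + (if k = r2 then 1 else 0)"
  proof
    fix k show "pt lam k = pt mu k + (if k = r1 then 1 else 0) + (if k = r2 then 1 else 0)"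
      using lamV(2)[rule_format, of k] D unfolding D_def by (cases "k \<in> D") (auto simp: D_def le_Suc_eq)
  qed
  have c2: "corner r2 R'"
    unfolding corner_def
  proof (intro conjI impI)
    have "pt lam r2 > 0" using ptl D by simp
    then show "r2 < length R'" unfolding lam_def pt_def by (auto split: if_splits)
  next
    assume "Suc r2 < length R'"
    have "pt lam (Suc r2) = pt mu (Suc r2)" using ptl D by simp
    also have "\<dots> \<le> pt mu r2" using part_mono[OF mu] by simp
    also have "\<dots> < pt lam r2" using ptl D by simp
    finally show "length (R' ! Suc r2) < length (R' ! r2)"
      using \<open>Suc r2 < length R'\<close> unfolding lam_def pt_def by auto
  qed
  obtain R1 x1 where d1: "del r2 R' = (R1, x1)" by (cases "del r2 R'") auto
  have h1: "ssytL R1" "ins x1 R1 = R'" "irow x1 R1 = r2" using ins_del[OF R'(1) c2 d1] by auto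
  have sh1: "map length R' = add_box (map length R1) r2" "r2 \<le> length R1"
    using ins_shape[of x1 R1] h1 by auto
  have pt1: "\<forall>k. pt (map length R1) k = pt mu k + (if k = r1 then 1 else 0)"
  proof
    fix k
    have "pt lam k = pt (map length R1) k + (if k = r2 then 1 else 0)"
      unfolding lam_def sh1(1) by (rule pt_add_box) (use sh1(2) in simp)
    then show "pt (map length R1) k = pt mu k + (if k = r1 then 1 else 0)"
      using ptl[rule_format, of k] D by auto
  qed
  have c1: "corner r1 R1"
    unfolding corner_def
  proof (intro conjI impI)
    have "pt (map length R1) r1 > 0" using pt1 by simp
    then show "r1 < length R1" unfolding pt_def by (auto split: if_splits)
  next
    assume "Suc r1 < length R1"
    have "pt (map length R1) (Suc r1) = pt mu (Suc r1)" using pt1 by simp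
    also have "\<dots> \<le> pt mu r1" using part_mono[OF mu] by simp
    also have "\<dots> < pt (map length R1) r1" using pt1 by simp
    finally show "length (R1 ! Suc r1) < length (R1 ! r1)"
      using \<open>Suc r1 < length R1\<close> unfolding pt_def by auto
  qed
  obtain R x2 where d2: "del r1 R1 = (R, x2)" by (cases "del r1 R1") auto
  have h2: "ssytL R" "ins x2 R = R1" "irow x2 R = r1" using ins_del[OF h1(1) c1 d2] by auto
  have sh2: "map length R1 = add_box (map length R) r1" "r1 \<le> length R"
    using ins_shape[of x2 R] h2 by auto
  have "\<forall>k. pt (map length R) k = pt mu k"
  proof
    fix k
    have "pt (map length R1) k = pt (map length R) k + (if k = r1 then 1 else 0)"
      unfolding sh2(1) by (rule pt_add_box) (use sh2(2) in simp)
    then show "pt (map length R) k = pt mu k" using pt1 by simp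
  qed
  then have shR: "map length R = mu" using part_eq[OF ssytL_partition[OF h2(1)] mu] by simp
  have R'eq: "R' = ins x1 (ins x2 R)" using h1 h2 by simp
  have sets: "set (concat R') = insert x1 (insert x2 (set (concat R)))" unfolding R'eq set_ins by simp
  have bx: "x1 < N" "x2 < N" "bnd N R" using R'(2) unfolding bnd_def sets by auto
  have "x1 < x2"
  proof (rule ccontr)
    assume "\<not> x1 < x2"
    then have "irow x1 (ins x2 R) \<le> irow x2 R" using bump_ge[OF h2(1)] by simp
    then show False using h1(3) h2 D(2) by simp
  qed
  then show ?thesis using shR h2(1) bx R'eq unfolding SSL_def by blast
qed

lemma pieri_bij:
  assumes mu: "is_partition mu"
  shows "bij_betw (\<lambda>(R, (i, j)). ins i (ins j R)) (SSL N mu \<times> {(i, j). i < j \<and> j < N})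
           {R'. ssytL R' \<and> bnd N R' \<and> map length R' \<in> V2 mu}"
  unfolding bij_betw_def
proof (intro conjI)
  show "inj_on (\<lambda>(R, (i, j)). ins i (ins j R)) (SSL N mu \<times> {(i, j). i < j \<and> j < N})"
  proof (rule inj_onI)
    fix p q assume p: "p \<in> SSL N mu \<times> {(i, j). i < j \<and> j < N}" and q: "q \<in> SSL N mu \<times> {(i, j). i < j \<and> j < N}"
      and e: "(\<lambda>(R, (i, j)). ins i (ins j R)) p = (\<lambda>(R, (i, j)). ins i (ins j R)) q"
    obtain R i j where pp: "p = (R, (i, j))" by (cases p) auto
    obtain R2 i2 j2 where qq: "q = (R2, (i2, j2))" by (cases q) auto
    show "p = q" using pieri_inj[of R N mu R2 i j i2 j2] p q e unfolding pp qq by auto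
  qed
  show "(\<lambda>(R, (i, j)). ins i (ins j R)) ` (SSL N mu \<times> {(i, j). i < j \<and> j < N}) =
    {R'. ssytL R' \<and> bnd N R' \<and> map length R' \<in> V2 mu}"
  proof
    show "(\<lambda>(R, (i, j)). ins i (ins j R)) ` (SSL N mu \<times> {(i, j). i < j \<and> j < N})
      \<subseteq> {R'. ssytL R' \<and> bnd N R' \<and> map length R' \<in> V2 mu}"
    proof
      fix R' assume "R' \<in> (\<lambda>(R, (i, j)). ins i (ins j R)) ` (SSL N mu \<times> {(i, j). i < j \<and> j < N})"
      then obtain R i j where "R \<in> SSL N mu" "i < j" "j < N" "R' = ins i (ins j R)" by auto
      then show "R' \<in> {R'. ssytL R' \<and> bnd N R' \<and> map length R' \<in> V2 mu}" using pieri_into by simp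
    qed
  next
    show "{R'. ssytL R' \<and> bnd N R' \<and> map length R' \<in> V2 mu}
      \<subseteq> (\<lambda>(R, (i, j)). ins i (ins j R)) ` (SSL N mu \<times> {(i, j). i < j \<and> j < N})"
    proof
      fix R' assume "R' \<in> {R'. ssytL R' \<and> bnd N R' \<and> map length R' \<in> V2 mu}"
      then obtain R i j where "R \<in> SSL N mu" "i < j" "j < N" "R' = ins i (ins j R)"
        using pieri_surj[OF mu] by blast
      then show "R' \<in> (\<lambda>(R, (i, j)). ins i (ins j R)) ` (SSL N mu \<times> {(i, j). i < j \<and> j < N})"
        by (auto intro!: image_eqI[of _ _ "(R, (i, j))"])
    qed
  qed
qed


definition monoL :: "nat list list \<Rightarrow> (nat \<Rightarrow>\<^sub>0 nat)" where
  "monoL R = sum_list (map (\<lambda>x. Poly_Mapping.single x 1) (concat R))"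

definition schurL :: "nat \<Rightarrow> nat list \<Rightarrow> ipoly" where
  "schurL N lam = (\<Sum>R\<in>SSL N lam. Poly_Mapping.single (monoL R) 1)"

lemma monoL_mset: "monoL R = sum_mset (image_mset (\<lambda>x. Poly_Mapping.single x 1) (mset (concat R)))"
  unfolding monoL_def by (simp add: sum_mset_sum_list[symmetric])

lemma monoL_ins: "monoL (ins x R) = Poly_Mapping.single x 1 + monoL R"
  unfolding monoL_mset ins_content by simp

lemma var_mult: "var i * var j = Poly_Mapping.single (Poly_Mapping.single i 1 + Poly_Mapping.single j 1) 1"
  unfolding var_def by (simp add: mult_single)

lemma pieri:
  assumes mu: "is_partition mu"
  shows "m11 N * schurL N mu = (\<Sum>lam\<in>V2 mu. schurL N lam)"
proof -
  define P where "P = {(i, j). i < j \<and> j < (N::nat)}"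
  define g where "g = (\<lambda>R. Poly_Mapping.single (monoL R) (1::int))"
  have finP: "finite P" unfolding P_def
    by (rule finite_subset[of _ "{..<N} \<times> {..<N}"]) auto
  have "m11 N * schurL N mu = (\<Sum>p\<in>P. case p of (i, j) \<Rightarrow> var i * var j) * (\<Sum>R\<in>SSL N mu. g R)"
    unfolding m11_def schurL_def P_def g_def by simp
  also have "\<dots> = (\<Sum>p\<in>P. \<Sum>R\<in>SSL N mu. (case p of (i, j) \<Rightarrow> var i * var j) * g R)"
    by (rule sum_product)
  also have "\<dots> = (\<Sum>R\<in>SSL N mu. \<Sum>p\<in>P. (case p of (i, j) \<Rightarrow> var i * var j) * g R)"
    by (rule sum.swap)
  also have "\<dots> = (\<Sum>x\<in>SSL N mu \<times> P. g ((\<lambda>(R, (i, j)). ins i (ins j R)) x))"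
    unfolding sum.cartesian_product
    by (rule sum.cong) (auto simp: var_mult g_def mult_single monoL_ins add.commute add.left_commute)
  also have "\<dots> = (\<Sum>R'\<in>{R'. ssytL R' \<and> bnd N R' \<and> map length R' \<in> V2 mu}. g R')"
    unfolding P_def by (rule sum.reindex_bij_betw[OF pieri_bij[OF mu]])
  also have "{R'. ssytL R' \<and> bnd N R' \<and> map length R' \<in> V2 mu} = (\<Union>lam\<in>V2 mu. SSL N lam)"
    unfolding SSL_def by auto
  also have "(\<Sum>R'\<in>(\<Union>lam\<in>V2 mu. SSL N lam). g R') = (\<Sum>lam\<in>V2 mu. \<Sum>R\<in>SSL N lam. g R)"
    by (rule sum.UNION_disjoint) (simp_all add: finite_V2 finite_SSL, auto simp: SSL_def)
  finally show ?thesis unfolding schurL_def g_def .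
qed

fun cc :: "nat \<Rightarrow> nat list \<Rightarrow> int" where
  "cc 0 lam = (if lam = [] then 1 else 0)"
| "cc (Suc n) lam = (\<Sum>mu\<in>partitions_of (2 * n). if lam \<in> V2 mu then cc n mu else 0)"

lemma single_sum: "Poly_Mapping.single k (sum f A) = (\<Sum>a\<in>A. Poly_Mapping.single k (f a))"
proof (cases "finite A")
  case True then show ?thesis by (induction A rule: finite_induct) (auto simp: single_add)
qed simp

lemma partitions_0: "partitions_of 0 = {[]}"
proof -
  have "is_partition l \<Longrightarrow> sum_list l = 0 \<Longrightarrow> l = []" for l
    using part_len_le[of l] by (metis le_zero_eq length_0_conv)
  then show ?thesis unfolding partitions_of_def by (auto simp: is_partition_def)
qed

lemma SSL_Nil: "SSL N [] = {[]}"
  unfolding SSL_def bnd_def by auto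

lemma schurL_Nil: "schurL N [] = 1"
  unfolding schurL_def SSL_Nil monoL_def by simp

lemma expansion_L:
  "m11 N ^ n = (\<Sum>lam\<in>partitions_of (2 * n). const (cc n lam) * schurL N lam)"
proof (induction n)
  case 0
  then show ?case by (simp add: partitions_0 schurL_Nil const_def)
next
  case (Suc n)
  have "m11 N ^ Suc n = m11 N * m11 N ^ n" by simp
  also have "\<dots> = (\<Sum>mu\<in>partitions_of (2 * n). const (cc n mu) * (m11 N * schurL N mu))"
    unfolding Suc by (simp add: sum_distrib_left mult.left_commute)
  also have "\<dots> = (\<Sum>mu\<in>partitions_of (2 * n). const (cc n mu) * (\<Sum>lam\<in>V2 mu. schurL N lam))"
    by (rule sum.cong) (auto simp: pieri partitions_of_def)
  also have "\<dots> = (\<Sum>mu\<in>partitions_of (2 * n). \<Sum>lam\<in>partitions_of (2 * Suc n).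
       (if lam \<in> V2 mu then const (cc n mu) * schurL N lam else 0))"
  proof (rule sum.cong[OF refl])
    fix mu assume mu: "mu \<in> partitions_of (2 * n)"
    have sub: "V2 mu \<subseteq> partitions_of (2 * Suc n)" using V2_sub[of mu] mu by (simp add: partitions_of_def)
    have "const (cc n mu) * (\<Sum>lam\<in>V2 mu. schurL N lam) = (\<Sum>lam\<in>V2 mu. const (cc n mu) * schurL N lam)"
      by (simp add: sum_distrib_left)
    also have "\<dots> = (\<Sum>lam\<in>partitions_of (2 * Suc n). (if lam \<in> V2 mu then const (cc n mu) * schurL N lam else 0))"
      by (rule sum.mono_neutral_cong_left) (use sub finite_partitions in auto)
    finally show "const (cc n mu) * (\<Sum>lam\<in>V2 mu. schurL N lam) = (\<Sum>lam\<in>partitions_of (2 * Suc n).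
       (if lam \<in> V2 mu then const (cc n mu) * schurL N lam else 0))" .
  qed
  also have "\<dots> = (\<Sum>lam\<in>partitions_of (2 * Suc n). \<Sum>mu\<in>partitions_of (2 * n).
       (if lam \<in> V2 mu then const (cc n mu) * schurL N lam else 0))"
    by (rule sum.swap)
  also have "\<dots> = (\<Sum>lam\<in>partitions_of (2 * Suc n). const (cc (Suc n) lam) * schurL N lam)"
  proof (rule sum.cong[OF refl])
    fix lam
    show "(\<Sum>mu\<in>partitions_of (2 * n). (if lam \<in> V2 mu then const (cc n mu) * schurL N lam else 0))
       = const (cc (Suc n) lam) * schurL N lam"
      unfolding cc.simps const_def single_sum sum_distrib_right
      by (rule sum.cong) auto
  qed
  finally show ?case .
qed


definition toL :: "nat list \<Rightarrow> (nat \<times> nat \<Rightarrow> nat) \<Rightarrow> nat list list" where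
  "toL lam T = map (\<lambda>i. map (\<lambda>j. T (i, j)) [0..<lam!i]) [0..<length lam]"

definition toF :: "nat list list \<Rightarrow> (nat \<times> nat \<Rightarrow> nat)" where
  "toF R = (\<lambda>(i, j). if i < length R \<and> j < length (R!i) then R!i!j else 0)"

lemma ssytL_intro:
  "(\<forall>i<length R. R!i \<noteq> [] \<and> sorted (R!i)) \<Longrightarrow> (\<forall>i. Suc i < length R \<longrightarrow> sb (R!i) (R!Suc i)) \<Longrightarrow> ssytL R"
proof (induction R)
  case Nil then show ?case by simp
next
  case (Cons r R)
  have a: "\<forall>i<length R. R!i \<noteq> [] \<and> sorted (R!i)" using Cons.prems(1) by auto
  have b: "\<forall>i. Suc i < length R \<longrightarrow> sb (R!i) (R!Suc i)"
  proof (intro allI impI)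
    fix i assume "Suc i < length R"
    then show "sb (R!i) (R!Suc i)" using Cons.prems(2)[rule_format, of "Suc i"] by simp
  qed
  have c: "case R of [] \<Rightarrow> True | s # _ \<Rightarrow> sb r s"
    using Cons.prems(2)[rule_format, of 0] by (cases R) auto
  show ?case using Cons.IH[OF a b] c Cons.prems(1)[rule_format, of 0] by simp
qed

lemma ssytL_row: "ssytL R \<Longrightarrow> i < length R \<Longrightarrow> R!i \<noteq> [] \<and> sorted (R!i)"
proof (induction R arbitrary: i)
  case (Cons r R) then show ?case by (cases i) auto
qed simp

lemma ssytL_col: "ssytL R \<Longrightarrow> Suc i < length R \<Longrightarrow> sb (R!i) (R!Suc i)"
proof (induction R arbitrary: i)
  case (Cons r R)
  show ?case
  proof (cases i)
    case 0 then show ?thesis using Cons.prems by (cases R) auto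
  next
    case (Suc i') then show ?thesis using Cons by auto
  qed
qed simp

lemma row_mono:
  assumes T: "T \<in> ssyt lam N" and c: "(i, j') \<in> cells lam" and jj: "j \<le> j'"
  shows "T (i, j) \<le> T (i, j')"
  using c jj
proof (induction j')
  case 0 then show ?case by simp
next
  case (Suc j')
  show ?case
  proof (cases "j = Suc j'")
    case False
    then have "j \<le> j'" using Suc.prems by simp
    moreover have "(i, j') \<in> cells lam" using Suc.prems by (simp add: cells_def)
    ultimately have "T (i, j) \<le> T (i, j')" using Suc.IH by simp
    moreover have "T (i, j') \<le> T (i, Suc j')" using T Suc.prems unfolding ssyt_def by blast
    ultimately show ?thesis by simp
  qed simp
qed

lemma toL_in:
  assumes lam: "is_partition lam" and T: "T \<in> ssyt lam N"
  shows "toL lam T \<in> SSL N lam"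
proof -
  let ?R = "toL lam T"
  have len: "length ?R = length lam" by (simp add: toL_def)
  have nth: "i < length lam \<Longrightarrow> ?R ! i = map (\<lambda>j. T (i, j)) [0..<lam!i]" for i by (simp add: toL_def)
  have ml: "map length ?R = lam" by (rule nth_equalityI) (auto simp: len nth)
  have rows: "\<forall>i<length ?R. ?R!i \<noteq> [] \<and> sorted (?R!i)"
  proof (intro allI impI conjI)
    fix i assume i: "i < length ?R"
    then show "?R!i \<noteq> []" using part_pos[OF lam] by (simp add: len nth)
    show "sorted (?R!i)" unfolding sorted_iff_nth_mono
    proof (intro allI impI)
      fix a b assume ab: "a \<le> b" "b < length (?R!i)"
      then have "(i, b) \<in> cells lam" using i by (simp add: len nth cells_def)
      then show "?R!i!a \<le> ?R!i!b" using row_mono[OF T _ ab(1)] ab i by (simp add: len nth)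
    qed
  qed
  have cols: "\<forall>i. Suc i < length ?R \<longrightarrow> sb (?R!i) (?R!Suc i)"
  proof (intro allI impI)
    fix i assume i: "Suc i < length ?R"
    have "lam ! Suc i \<le> lam ! i" using part_mono[OF lam, of i "Suc i"] i by (simp add: pt_def len)
    moreover have "T (i, j) < T (Suc i, j)" if "j < lam ! Suc i" for j
      using T that i unfolding ssyt_def by (auto simp: cells_def len)
    ultimately show "sb (?R!i) (?R!Suc i)" unfolding sb_def using i by (simp add: len nth)
  qed
  have b: "bnd N ?R"
    unfolding bnd_def toL_def using T unfolding ssyt_def by (auto simp: cells_def)
  show ?thesis unfolding SSL_def using ssytL_intro[OF rows cols] b ml by simp
qed

lemma toL_inj:
  assumes "T \<in> ssyt lam N" "T' \<in> ssyt lam N" "toL lam T = toL lam T'"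
  shows "T = T'"
proof
  fix c :: "nat \<times> nat"
  obtain i j where c: "c = (i, j)" by (cases c)
  show "T c = T' c"
  proof (cases "c \<in> cells lam")
    case True
    then have "i < length lam" "j < lam ! i" using c by (auto simp: cells_def)
    then have "toL lam T ! i ! j = T (i, j)" "toL lam T' ! i ! j = T' (i, j)" by (auto simp: toL_def)
    then show ?thesis using assms(3) c by simp
  next
    case False then show ?thesis using assms c unfolding ssyt_def by auto
  qed
qed

lemma toF_in:
  assumes R: "R \<in> SSL N lam"
  shows "toF R \<in> ssyt lam N \<and> toL lam (toF R) = R"
proof -
  have sR: "ssytL R" "bnd N R" "map length R = lam" using R by (auto simp: SSL_def)
  have len: "length lam = length R" using sR(3) by auto
  have lni: "i < length R \<Longrightarrow> lam ! i = length (R ! i)" for i using sR(3) by auto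
  have cl: "cells lam = {(i, j). i < length R \<and> j < length (R!i)}"
    unfolding cells_def using len lni by auto
  have "toF R \<in> ssyt lam N"
    unfolding ssyt_def cl
  proof (intro CollectI conjI allI impI ballI)
    fix c assume "c \<notin> {(i, j). i < length R \<and> j < length (R!i)}"
    then show "toF R c = 0" unfolding toF_def by (cases c) auto
  next
    fix c assume "c \<in> {(i, j). i < length R \<and> j < length (R!i)}"
    then obtain i j where c: "c = (i, j)" "i < length R" "j < length (R!i)" by auto
    have m1: "R!i \<in> set R" using c(2) by (rule nth_mem)
    have m2: "R!i!j \<in> set (R!i)" using c(3) by (rule nth_mem)
    have "R!i!j \<in> set (concat R)" using m1 m2 by auto
    then show "toF R c < N" using sR(2) c unfolding bnd_def toF_def by auto
  next
    fix i j assume a: "(i, Suc j) \<in> {(i, j). i < length R \<and> j < length (R!i)}"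
    then have "sorted (R!i)" using ssytL_row[OF sR(1)] by auto
    then show "toF R (i, j) \<le> toF R (i, Suc j)" using a unfolding toF_def by (auto simp: sorted_nth_mono)
  next
    fix i j assume a: "(Suc i, j) \<in> {(i, j). i < length R \<and> j < length (R!i)}"
    then have "sb (R!i) (R!Suc i)" using ssytL_col[OF sR(1)] by auto
    then show "toF R (i, j) < toF R (Suc i, j)" using a unfolding toF_def sb_def by auto
  qed
  moreover have "toL lam (toF R) = R"
    by (rule nth_equalityI) (auto simp: toL_def toF_def len lni intro!: nth_equalityI)
  ultimately show ?thesis by simp
qed

lemma toL_bij: "is_partition lam \<Longrightarrow> bij_betw (toL lam) (ssyt lam N) (SSL N lam)"
  unfolding bij_betw_def inj_on_def
  using toL_in toL_inj toF_in by (metis (no_types, lifting) image_iff subsetI subset_antisym)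

lemma sum_list_concat_map: "sum_list (map f (concat xss)) = sum_list (map (\<lambda>xs. sum_list (map f xs)) xss)"
  by (induction xss) auto

lemma sum_list_upt_sum: "sum_list (map g [0..<n]) = (\<Sum>i<n. g i)"
  using sum_set_upt_conv_sum_list_nat[of g 0 n] by (simp add: atLeast0LessThan)

lemma content_toL: "content lam T = monoL (toL lam T)"
proof -
  have "content lam T = (\<Sum>c\<in>(SIGMA i:{..<length lam}. {..<lam!i}). Poly_Mapping.single (T c) 1)"
    unfolding content_def cells_def by (rule sum.cong) auto
  also have "\<dots> = (\<Sum>(i, j)\<in>(SIGMA i:{..<length lam}. {..<lam!i}). Poly_Mapping.single (T (i, j)) 1)"
    by (simp add: case_prod_eta)
  also have "\<dots> = (\<Sum>i<length lam. \<Sum>j<lam!i. Poly_Mapping.single (T (i, j)) 1)"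
    by (rule sum.Sigma[symmetric]) auto
  also have "\<dots> = monoL (toL lam T)"
    unfolding monoL_def toL_def sum_list_concat_map by (simp add: sum_list_upt_sum o_def)
  finally show ?thesis .
qed

lemma schur_eq: "is_partition lam \<Longrightarrow> schur lam N = schurL N lam"
  unfolding schur_def schurL_def content_toL
  by (rule sum.reindex_bij_betw[OF toL_bij])


definition mono :: "nat list \<Rightarrow> (nat \<Rightarrow>\<^sub>0 nat)" where
  "mono mu = (\<Sum>i<length mu. Poly_Mapping.single i (mu ! i))"

lemma lookup_mono: "Poly_Mapping.lookup (mono mu) k = pt mu k"
proof -
  have "Poly_Mapping.lookup (mono mu) k = (\<Sum>i<length mu. (mu ! i when i = k))"
    unfolding mono_def lookup_sum lookup_single by simp
  also have "\<dots> = pt mu k" unfolding pt_def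
    by (cases "k < length mu") (auto simp: when_def sum.delta)
  finally show ?thesis .
qed

lemma lookup_content: "Poly_Mapping.lookup (content lam T) v = card {c \<in> cells lam. T c = v}"
proof -
  have fc: "finite (cells lam)"
    unfolding cells_def by (rule finite_subset[of _ "{..<length lam} \<times> {..<Max (insert 0 (set lam))}"])
      (auto, meson Max_ge List.finite_set finite_insert insertCI less_le_trans nth_mem)
  have "Poly_Mapping.lookup (content lam T) v = (\<Sum>c\<in>cells lam. (1 when T c = v))"
    unfolding content_def lookup_sum lookup_single by simp
  also have "\<dots> = card {c \<in> cells lam. T c = v}"
    using fc by (simp add: when_def sum.If_cases Int_def)
  finally show ?thesis .
qed

lemma finite_cells: "finite (cells lam)"
  unfolding cells_def by (rule finite_subset[of _ "{..<length lam} \<times> {..<Max (insert 0 (set lam))}"])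
      (auto, meson Max_ge List.finite_set finite_insert insertCI less_le_trans nth_mem)

lemma cells_row: "{c \<in> cells lam. fst c = i} = {i} \<times> {..<pt lam i}"
  unfolding cells_def pt_def by auto

lemma T_ge_row:
  assumes lam: "is_partition lam" and T: "T \<in> ssyt lam N"
  shows "(i, j) \<in> cells lam \<Longrightarrow> i \<le> T (i, j)"
proof (induction i)
  case 0 then show ?case by simp
next
  case (Suc i)
  have "lam ! Suc i \<le> lam ! i" using part_mono[OF lam, of i "Suc i"] Suc.prems by (simp add: pt_def cells_def)
  then have "(i, j) \<in> cells lam" using Suc.prems by (auto simp: cells_def)
  then have "i \<le> T (i, j)" by (rule Suc.IH)
  moreover have "T (i, j) < T (Suc i, j)" using T Suc.prems unfolding ssyt_def by blast
  ultimately show ?case by simp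
qed

lemma dominance:
  assumes lam: "is_partition lam" and T: "T \<in> ssyt lam N" and ct: "content lam T = mono mu"
  shows "(\<Sum>i\<le>k. pt mu i) \<le> (\<Sum>i\<le>k. pt lam i)"
proof -
  have "(\<Sum>i\<le>k. pt mu i) = (\<Sum>v\<le>k. card {c \<in> cells lam. T c = v})"
    using lookup_content[of lam T] ct by (simp add: lookup_mono)
  also have "\<dots> = card (\<Union>v\<in>{..k}. {c \<in> cells lam. T c = v})"
    by (rule card_UN_disjoint[symmetric]) (auto simp: finite_cells)
  also have "(\<Union>v\<in>{..k}. {c \<in> cells lam. T c = v}) = {c \<in> cells lam. T c \<le> k}" by auto
  also have "card {c \<in> cells lam. T c \<le> k} \<le> card {c \<in> cells lam. fst c \<le> k}"
  proof (rule card_mono)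
    show "finite {c \<in> cells lam. fst c \<le> k}" using finite_cells by simp
    show "{c \<in> cells lam. T c \<le> k} \<subseteq> {c \<in> cells lam. fst c \<le> k}"
      using T_ge_row[OF lam T] by force
  qed
  also have "{c \<in> cells lam. fst c \<le> k} = (\<Union>i\<in>{..k}. {c \<in> cells lam. fst c = i})" by auto
  also have "card \<dots> = (\<Sum>i\<le>k. card {c \<in> cells lam. fst c = i})"
    by (rule card_UN_disjoint) (auto simp: finite_cells)
  also have "\<dots> = (\<Sum>i\<le>k. pt lam i)" unfolding cells_row by (simp add: card_cartesian_product)
  finally show ?thesis .
qed

lemma pt_Cons_Suc: "pt (x # l) (Suc i) = pt l i"
  by (simp add: pt_def)

lemma pt_Cons_0: "pt (x # l) 0 = x"
  by (simp add: pt_def)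

lemma lex_less:
  "(\<forall>i<k. pt a i = pt b i) \<Longrightarrow> pt a k < pt b k \<Longrightarrow> 0 \<notin> set a \<Longrightarrow> a < b"
proof (induction k arbitrary: a b)
  case 0
  then show ?case
    by (cases a; cases b) (auto simp: pt_def)
next
  case (Suc k)
  show ?case
  proof (cases a)
    case Nil
    then have "b \<noteq> []" using Suc.prems(2) by (auto simp: pt_def)
    then show ?thesis using Nil by (cases b) auto
  next
    case (Cons x a')
    have "pt a 0 = pt b 0" using Suc.prems(1) by auto
    then have "x > 0" "b \<noteq> []" using Cons Suc.prems(3) by (auto simp: pt_def)
    then obtain y b' where b: "b = y # b'" by (cases b) auto
    have xy: "x = y" using \<open>pt a 0 = pt b 0\<close> Cons b by (simp add: pt_def)
    have "\<forall>i<k. pt a' i = pt b' i"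
    proof (intro allI impI)
      fix i assume "i < k" then show "pt a' i = pt b' i" using Suc.prems(1)[rule_format, of "Suc i"] Cons b by (simp add: pt_Cons_Suc)
    qed
    moreover have "pt a' k < pt b' k" using Suc.prems(2) Cons b by (simp add: pt_Cons_Suc)
    moreover have "0 \<notin> set a'" using Suc.prems(3) Cons by simp
    ultimately have "a' < b'" by (rule Suc.IH)
    then show ?thesis using Cons b xy by simp
  qed
qed

lemma dom_lex:
  assumes lam: "is_partition lam" and mu: "is_partition mu" and ne: "lam \<noteq> mu"
    and dom: "\<forall>k. (\<Sum>i\<le>k. pt mu i) \<le> (\<Sum>i\<le>k. pt lam i)"
  shows "mu < lam"
proof -
  have ex: "\<exists>k. pt lam k \<noteq> pt mu k" using part_eq[OF lam mu] ne by blast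
  define k where "k = (LEAST k. pt lam k \<noteq> pt mu k)"
  have k: "pt lam k \<noteq> pt mu k" unfolding k_def by (rule LeastI_ex[OF ex])
  have before: "\<forall>i<k. pt mu i = pt lam i" unfolding k_def using not_less_Least by fastforce
  have "(\<Sum>i\<le>k. pt mu i) = (\<Sum>i<k. pt mu i) + pt mu k" by (simp add: lessThan_Suc_atMost[symmetric])
  moreover have "(\<Sum>i\<le>k. pt lam i) = (\<Sum>i<k. pt lam i) + pt lam k" by (simp add: lessThan_Suc_atMost[symmetric])
  moreover have "(\<Sum>i<k. pt mu i) = (\<Sum>i<k. pt lam i)" using before by simp
  ultimately have "pt mu k \<le> pt lam k" using dom[rule_format, of k] by simp
  then have "pt mu k < pt lam k" using k by simp
  moreover have "0 \<notin> set mu" using mu unfolding is_partition_def by simp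
  ultimately show ?thesis using lex_less before by blast
qed

lemma T0_exists:
  assumes mu: "is_partition mu" and len: "length mu \<le> N"
  shows "\<exists>T\<in>ssyt mu N. content mu T = mono mu"
proof -
  define T where "T = (\<lambda>c. if c \<in> cells mu then fst c else 0)"
  have "T \<in> ssyt mu N" unfolding ssyt_def T_def using len by (auto simp: cells_def)
  moreover have "content mu T = mono mu"
  proof (rule poly_mapping_eqI)
    fix k
    have "Poly_Mapping.lookup (content mu T) k = card {c \<in> cells mu. T c = k}" by (rule lookup_content)
    also have "{c \<in> cells mu. T c = k} = {c \<in> cells mu. fst c = k}" unfolding T_def by auto
    also have "card \<dots> = pt mu k" unfolding cells_row by (simp add: card_cartesian_product)
    finally show "Poly_Mapping.lookup (content mu T) k = Poly_Mapping.lookup (mono mu) k" by (simp add: lookup_mono)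
  qed
  ultimately show ?thesis by blast
qed

lemma finite_ssyt: "is_partition lam \<Longrightarrow> finite (ssyt lam N)"
  using bij_betw_finite[OF toL_bij] finite_SSL by blast

lemma lookup_const_schur:
  assumes lam: "is_partition lam"
  shows "Poly_Mapping.lookup (const c * schur lam N) m = c * int (card {T \<in> ssyt lam N. content lam T = m})"
proof -
  have "const c * schur lam N = (\<Sum>T\<in>ssyt lam N. Poly_Mapping.single (content lam T) c)"
    unfolding schur_def const_def sum_distrib_left by (simp add: mult_single)
  then have "Poly_Mapping.lookup (const c * schur lam N) m = (\<Sum>T\<in>ssyt lam N. (c when content lam T = m))"
    by (simp add: lookup_sum lookup_single)
  also have "\<dots> = (\<Sum>T\<in>{T \<in> ssyt lam N. content lam T = m}. c)"
    using finite_ssyt[OF lam] by (simp add: when_def sum.If_cases Int_def)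
  also have "\<dots> = c * int (card {T \<in> ssyt lam N. content lam T = m})" by simp
  finally show ?thesis .
qed

lemma uniqueness:
  assumes dN: "d \<le> N"
    and eq: "(\<Sum>lam\<in>partitions_of d. const (c lam) * schur lam N) = (\<Sum>lam\<in>partitions_of d. const (c' lam) * schur lam N)"
  shows "\<forall>lam\<in>partitions_of d. c lam = c' lam"
proof (rule ccontr)
  assume "\<not> (\<forall>lam\<in>partitions_of d. c lam = c' lam)"
  then have Dne: "{lam \<in> partitions_of d. c lam \<noteq> c' lam} \<noteq> {}" by auto
  define D where "D = {lam \<in> partitions_of d. c lam \<noteq> c' lam}"
  have finD: "finite D" unfolding D_def using finite_partitions by simp
  define l0 where "l0 = Max D"
  have "D \<noteq> {}" using Dne D_def by simp
  then have l0D: "l0 \<in> D" unfolding l0_def using finD by (simp add: Max_in)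
  have l0max: "\<And>l. l \<in> D \<Longrightarrow> l \<le> l0" unfolding l0_def using finD by simp
  have l0p: "is_partition l0" "sum_list l0 = d" using l0D unfolding D_def partitions_of_def by auto
  define m where "m = mono l0"
  define K where "K = (\<lambda>lam. int (card {T \<in> ssyt lam N. content lam T = m}))"
  have lk: "\<And>lam cv. lam \<in> partitions_of d \<Longrightarrow> Poly_Mapping.lookup (const cv * schur lam N) m = cv * K lam"
    unfolding K_def using lookup_const_schur by (simp add: partitions_of_def)
  have "(\<Sum>lam\<in>partitions_of d. c lam * K lam) = (\<Sum>lam\<in>partitions_of d. c' lam * K lam)"
  proof -
    have "Poly_Mapping.lookup (\<Sum>lam\<in>partitions_of d. const (c lam) * schur lam N) m =
          Poly_Mapping.lookup (\<Sum>lam\<in>partitions_of d. const (c' lam) * schur lam N) m" using eq by simp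
    then show ?thesis unfolding lookup_sum using lk by simp
  qed
  then have "(\<Sum>lam\<in>partitions_of d. (c lam - c' lam) * K lam) = 0"
    by (simp add: left_diff_distrib sum_subtractf)
  moreover have "(\<Sum>lam\<in>partitions_of d. (c lam - c' lam) * K lam) = (c l0 - c' l0) * K l0"
  proof -
    have l0P: "l0 \<in> partitions_of d" using l0D unfolding D_def by simp
    have z: "(\<Sum>lam\<in>partitions_of d - {l0}. (c lam - c' lam) * K lam) = 0"
    proof (rule sum.neutral, rule ballI)
      fix lam assume lam: "lam \<in> partitions_of d - {l0}"
      have lp: "is_partition lam" using lam unfolding partitions_of_def by simp
      show "(c lam - c' lam) * K lam = 0"
      proof (cases "K lam = 0")
        case False
        then have "{T \<in> ssyt lam N. content lam T = m} \<noteq> {}" unfolding K_def by (auto simp: card_gt_0_iff)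
        then obtain T where T: "T \<in> ssyt lam N" "content lam T = mono l0" unfolding m_def by auto
        have "l0 < lam"
          by (rule dom_lex[OF lp l0p(1)]) (use lam dominance[OF lp T] in auto)
        then have "lam \<notin> D" using l0max by (meson leD)
        then show ?thesis using lam unfolding D_def by simp
      qed simp
    qed
    show ?thesis using sum.remove[OF finite_partitions l0P, of "\<lambda>lam. (c lam - c' lam) * K lam"] z by simp
  qed
  moreover have "K l0 > 0"
  proof -
    have "length l0 \<le> N" using part_len_le[OF l0p(1)] l0p(2) dN by simp
    then obtain T where "T \<in> ssyt l0 N" "content l0 T = mono l0" using T0_exists[OF l0p(1)] by blast
    then have "{T \<in> ssyt l0 N. content l0 T = m} \<noteq> {}" unfolding m_def by auto
    then show ?thesis unfolding K_def using finite_ssyt[OF l0p(1)] by (simp add: card_gt_0_iff)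
  qed
  ultimately have "c l0 = c' l0" by simp
  then show False using l0D unfolding D_def by simp
qed


definition paths :: "nat \<Rightarrow> int \<Rightarrow> int list set" where
  "paths n h = {s. length s = n \<and> set s \<subseteq> {-1, 0, 1}
      \<and> (\<forall>k\<le>n. sum_list (take k s) \<ge> 0)
      \<and> sum_list s = h
      \<and> (\<forall>k<n. s ! k = 0 \<longrightarrow> sum_list (take k s) > 0)}"

lemma riordan_paths_eq: "riordan_paths n = paths n 0"
  unfolding riordan_paths_def paths_def by simp

lemma sum_list_bound: "set s \<subseteq> {-1, 0, 1} \<Longrightarrow> sum_list s \<le> int (length s)"
proof (induction s)
  case (Cons x s) then show ?case by auto
qed simp

lemma paths_empty: "h < 0 \<or> h > int n \<Longrightarrow> paths n h = {}"
proof -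
  assume h: "h < 0 \<or> h > int n"
  { fix s assume s: "s \<in> paths n h"
    then have "sum_list (take n s) \<ge> 0" "length s = n" "set s \<subseteq> {-1,0,1}" "sum_list s = h"
      unfolding paths_def by auto
    then have False using h sum_list_bound[of s] by auto }
  then show ?thesis by blast
qed

lemma paths_finite: "finite (paths n h)"
proof -
  have "paths n h \<subseteq> {s. set s \<subseteq> {-1, 0, 1} \<and> length s \<le> n}" unfolding paths_def by auto
  moreover have "finite {s. set s \<subseteq> {-1::int, 0, 1} \<and> length s \<le> n}"
    by (rule finite_lists_length_le) simp
  ultimately show ?thesis by (rule finite_subset)
qed

lemma paths_Suc_mem:
  "t @ [e] \<in> paths (Suc n) h \<longleftrightarrow>
     t \<in> paths n (h - e) \<and> e \<in> {-1, 0, 1} \<and> (e = 0 \<longrightarrow> h > 0) \<and> h \<ge> 0"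
    (is "?L \<longleftrightarrow> ?R")
proof
  assume L: ?L
  have Lc: "length (t @ [e]) = Suc n \<and> set (t @ [e]) \<subseteq> {-1,0,1}
    \<and> (\<forall>k\<le>Suc n. sum_list (take k (t @ [e])) \<ge> 0) \<and> sum_list (t @ [e]) = h
    \<and> (\<forall>k<Suc n. (t @ [e]) ! k = 0 \<longrightarrow> sum_list (take k (t @ [e])) > 0)"
    using L unfolding paths_def by (rule CollectD)
  note Ls = Lc[THEN conjunct1] Lc[THEN conjunct2, THEN conjunct1]
    Lc[THEN conjunct2, THEN conjunct2, THEN conjunct1]
    Lc[THEN conjunct2, THEN conjunct2, THEN conjunct2, THEN conjunct1]
    Lc[THEN conjunct2, THEN conjunct2, THEN conjunct2, THEN conjunct2]
  have len: "length t = n" using Ls(1) by simp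
  have tk: "k \<le> n \<Longrightarrow> take k (t @ [e]) = take k t" for k using len by simp
  have e: "e \<in> {-1, 0, 1}" using Ls(2) by auto
  have st: "set t \<subseteq> {-1, 0, 1}" using Ls(2) by auto
  have pre: "\<forall>k\<le>n. sum_list (take k t) \<ge> 0"
  proof (intro allI impI)
    fix k assume k: "k \<le> n"
    then have "k \<le> Suc n" by simp
    then have "sum_list (take k (t @ [e])) \<ge> 0" using Ls(3) by blast
    then show "sum_list (take k t) \<ge> 0" using tk[OF k] by simp
  qed
  have sm: "sum_list t = h - e" using Ls(4) by simp
  have fl: "\<forall>k<n. t ! k = 0 \<longrightarrow> sum_list (take k t) > 0"
  proof (intro allI impI)
    fix k assume k: "k < n" "t ! k = 0"
    then have "(t @ [e]) ! k = 0" using len by (simp add: nth_append)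
    moreover have "k < Suc n" using k by simp
    ultimately have "sum_list (take k (t @ [e])) > 0" using Ls(5) by blast
    then show "sum_list (take k t) > 0" using tk k by simp
  qed
  have en: "(t @ [e]) ! n = e" using len by (metis nth_append_length)
  have ez: "e = 0 \<longrightarrow> h > 0"
  proof
    assume "e = 0"
    then have "sum_list (take n (t @ [e])) > 0" using Ls(5) en by simp
    then show "h > 0" using tk[of n] len sm \<open>e = 0\<close> by simp
  qed
  have "h \<ge> 0" using Ls(3)[rule_format, of "Suc n"] Ls(1) Ls(4) by simp
  then show ?R using len pre sm fl st e ez unfolding paths_def by blast
next
  assume R: ?R
  have Rt: "t \<in> paths n (h - e)" "e \<in> {-1, 0, 1}" "e = 0 \<longrightarrow> h > 0" "h \<ge> 0" using R by simp_all
  have Rc: "length t = n \<and> set t \<subseteq> {-1,0,1}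
    \<and> (\<forall>k\<le>n. sum_list (take k t) \<ge> 0) \<and> sum_list t = h - e
    \<and> (\<forall>k<n. t ! k = 0 \<longrightarrow> sum_list (take k t) > 0)"
    using Rt(1) unfolding paths_def by (rule CollectD)
  note Rs = Rc[THEN conjunct1] Rc[THEN conjunct2, THEN conjunct1]
    Rc[THEN conjunct2, THEN conjunct2, THEN conjunct1]
    Rc[THEN conjunct2, THEN conjunct2, THEN conjunct2, THEN conjunct1]
    Rc[THEN conjunct2, THEN conjunct2, THEN conjunct2, THEN conjunct2]
  have len: "length t = n" by (rule Rs(1))
  have tk: "k \<le> n \<Longrightarrow> take k (t @ [e]) = take k t" for k using len by simp
  show ?L unfolding paths_def
  proof (intro CollectI conjI allI impI)
    show "length (t @ [e]) = Suc n" using len by simp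
    show "set (t @ [e]) \<subseteq> {-1, 0, 1}" using Rs(2) Rt(2) by simp
  next
    fix k assume k: "k \<le> Suc n"
    show "sum_list (take k (t @ [e])) \<ge> 0"
    proof (cases "k \<le> n")
      case True then show ?thesis using tk[OF True] Rs(3) by simp
    next
      case False then have "k = Suc n" using k by simp
      then show ?thesis using Rs(4) Rt(4) len by simp
    qed
  next
    show "sum_list (t @ [e]) = h" using Rs(4) by simp
  next
    fix k assume k: "k < Suc n" "(t @ [e]) ! k = 0"
    show "sum_list (take k (t @ [e])) > 0"
    proof (cases "k < n")
      case True
      then have "t ! k = 0" using k len by (simp add: nth_append)
      then show ?thesis using tk[of k] True Rs(5) by simp
    next
      case False then have kn: "k = n" using k by simp
      then have "e = 0" using k len by (metis nth_append_length)
      then show ?thesis using Rt(3) kn tk[of n] len Rs(4) by simp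
    qed
  qed
qed

lemma paths_Suc_split: "s \<in> paths (Suc n) h \<Longrightarrow> \<exists>t e. s = t @ [e]"
proof -
  assume "s \<in> paths (Suc n) h"
  then have "length s = Suc n" unfolding paths_def by simp
  then have "s \<noteq> []" by auto
  then have "s = butlast s @ [last s]" by simp
  then show ?thesis by blast
qed

lemma card_paths_Suc:
  assumes h0: "h \<ge> 0"
  shows "card (paths (Suc n) h) = card (paths n (h - 1)) + (if h > 0 then card (paths n h) else 0) + card (paths n (h + 1))"
proof -
  note True = h0
  define A where "A = (\<lambda>t. t @ [1::int]) ` paths n (h - 1)"
  define B where "B = (\<lambda>t. t @ [0::int]) ` (if h > 0 then paths n h else {})"
  define C where "C = (\<lambda>t. t @ [-1::int]) ` paths n (h + 1)"
  have eq: "paths (Suc n) h = A \<union> B \<union> C"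
  proof
    show "paths (Suc n) h \<subseteq> A \<union> B \<union> C"
    proof
      fix s assume s: "s \<in> paths (Suc n) h"
      obtain t e where se: "s = t @ [e]" using paths_Suc_split[OF s] by blast
      have m: "t \<in> paths n (h - e)" "e \<in> {-1, 0, 1}" "e = 0 \<longrightarrow> h > 0"
        using paths_Suc_mem[of t e n h] s unfolding se by simp_all
      show "s \<in> A \<union> B \<union> C" using m unfolding A_def B_def C_def se by auto
    qed
  next
    have "A \<subseteq> paths (Suc n) h"
    proof
      fix s assume "s \<in> A"
      then obtain t where t: "t \<in> paths n (h - 1)" "s = t @ [1]" unfolding A_def by auto
      then show "s \<in> paths (Suc n) h" using paths_Suc_mem[of t 1 n h] True by simp
    qed
    moreover have "B \<subseteq> paths (Suc n) h"
    proof
      fix s assume "s \<in> B"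
      then obtain t where t: "t \<in> paths n h" "s = t @ [0]" "h > 0" unfolding B_def by (auto split: if_splits)
      then show "s \<in> paths (Suc n) h" using paths_Suc_mem[of t 0 n h] True by simp
    qed
    moreover have "C \<subseteq> paths (Suc n) h"
    proof
      fix s assume "s \<in> C"
      then obtain t where t: "t \<in> paths n (h + 1)" "s = t @ [-1]" unfolding C_def by auto
      then show "s \<in> paths (Suc n) h" using paths_Suc_mem[of t "-1" n h] True by simp
    qed
    ultimately show "A \<union> B \<union> C \<subseteq> paths (Suc n) h" by blast
  qed
  have cA: "card A = card (paths n (h - 1))" unfolding A_def by (rule card_image) (simp add: inj_on_def)
  have cB: "card B = (if h > 0 then card (paths n h) else 0)" unfolding B_def
    by (subst card_image) (auto simp: inj_on_def)
  have cC: "card C = card (paths n (h + 1))" unfolding C_def by (rule card_image) (simp add: inj_on_def)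
  have fin: "finite A" "finite B" "finite C" unfolding A_def B_def C_def using paths_finite by auto
  have "card (A \<union> B \<union> C) = card A + card B + card C"
  proof -
    have d1: "A \<inter> B = {}" "(A \<union> B) \<inter> C = {}" unfolding A_def B_def C_def by auto
    have "card (A \<union> B \<union> C) = card (A \<union> B) + card C"
      by (rule card_Un_disjoint) (use fin d1 in auto)
    also have "card (A \<union> B) = card A + card B"
      by (rule card_Un_disjoint) (use fin d1 in auto)
    finally show ?thesis .
  qed
  then show ?thesis using eq cA cB cC by simp
qed


lemma V2_rows:
  assumes "lam \<in> V2 mu"
  shows "\<exists>r1 r2. r1 < r2 \<and> (\<forall>k. pt lam k = pt mu k + (if k = r1 then 1 else 0) + (if k = r2 then 1 else 0))"
proof -
  have lamV: "is_partition lam" "\<forall>k. pt mu k \<le> pt lam k \<and> pt lam k \<le> Suc (pt mu k)"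
    "sum_list lam = sum_list mu + 2"
    using assms unfolding V2_def by auto
  define K where "K = length lam + length mu"
  define D where "D = {k. pt lam k \<noteq> pt mu k}"
  have DK: "D \<subseteq> {..<K}" unfolding D_def K_def pt_def by auto
  have "sum_list lam = (\<Sum>k<K. pt lam k)" "sum_list mu = (\<Sum>k<K. pt mu k)"
    by (rule sum_pt, simp add: K_def)+
  then have "(\<Sum>k<K. pt lam k) = (\<Sum>k<K. pt mu k) + 2" using lamV(3) by simp
  moreover have "(\<Sum>k<K. pt lam k) = (\<Sum>k<K. pt mu k + (if k \<in> D then 1 else 0))"
  proof (rule sum.cong[OF refl])
    fix k
    have "pt mu k \<le> pt lam k" "pt lam k \<le> Suc (pt mu k)" using lamV(2) by auto
    then show "pt lam k = pt mu k + (if k \<in> D then 1 else 0)" unfolding D_def by auto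
  qed
  moreover have "(\<Sum>k<K. (if k \<in> D then 1 else 0)::nat) = card D"
    using DK by (simp add: sum.If_cases Int_absorb1)
  ultimately have "card D = 2" by (simp add: sum.distrib)
  then obtain a b where ab: "D = {a, b}" "a \<noteq> b" by (auto simp: card_2_iff)
  define r1 where "r1 = min a b"
  define r2 where "r2 = max a b"
  have D: "D = {r1, r2}" "r1 < r2" using ab unfolding r1_def r2_def by (auto simp: min_def max_def)
  have "\<forall>k. pt lam k = pt mu k + (if k = r1 then 1 else 0) + (if k = r2 then 1 else 0)"
  proof
    fix k show "pt lam k = pt mu k + (if k = r1 then 1 else 0) + (if k = r2 then 1 else 0)"
      using lamV(2)[rule_format, of k] D unfolding D_def by (cases "k \<in> D") (auto simp: D_def le_Suc_eq)
  qed
  then show ?thesis using D(2) by blast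
qed

definition twocol :: "nat \<Rightarrow> nat \<Rightarrow> nat list" where
  "twocol a h = replicate a 2 @ replicate (2 * h) 1"

lemma pt_twocol: "pt (twocol a h) i = (if i < a then 2 else if i < a + 2 * h then 1 else 0)"
  unfolding twocol_def pt_def by (auto simp: nth_append)

lemma twocol_part: "is_partition (twocol a h)"
  unfolding twocol_def is_partition_def by (auto simp: sorted_wrt_iff_nth_less nth_append)

lemma sum_twocol: "sum_list (twocol a h) = 2 * a + 2 * h"
  unfolding twocol_def by (simp add: sum_list_replicate)

lemma length_twocol: "length (twocol a h) = a + 2 * h"
  unfolding twocol_def by simp

lemma twocol_eqI: "is_partition mu \<Longrightarrow> (\<forall>k. pt mu k = (if k < a then 2 else if k < a + 2 * h then 1 else 0)) \<Longrightarrow> mu = twocol a h"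
  using part_eq[OF _ twocol_part] pt_twocol by metis

lemma pred_char:
  assumes mu: "is_partition mu"
  shows "twocol a h \<in> V2 mu \<longleftrightarrow>
    (h \<ge> 1 \<and> mu = twocol a (h - 1)) \<or> (a \<ge> 1 \<and> h \<ge> 1 \<and> mu = twocol (a - 1) h) \<or> (a \<ge> 2 \<and> mu = twocol (a - 2) (h + 1))"
    (is "?L \<longleftrightarrow> ?R")
proof
  assume L: ?L
  obtain r1 r2 where r: "r1 < r2" "\<forall>k. pt (twocol a h) k = pt mu k + (if k = r1 then 1 else 0) + (if k = r2 then 1 else 0)"
    using V2_rows[OF L] by blast
  have P: "pt mu k = pt (twocol a h) k - (if k = r1 then 1 else 0) - (if k = r2 then 1 else 0)" for k
    using r(2)[rule_format, of k] by simp
  have mo: "pt mu (Suc k) \<le> pt mu k" for k using part_mono[OF mu, of k "Suc k"] by simp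
  have r2b: "r2 < a + 2 * h" using r(2)[rule_format, of r2] pt_twocol[of a h r2] by (auto split: if_splits)
  show ?R
  proof (cases "r2 < a")
    case True
    have r2a: "r2 = a - 1"
    proof (rule ccontr)
      assume "r2 \<noteq> a - 1"
      then have "Suc r2 < a" using True by simp
      then show False using mo[of r2] P[of r2] P[of "Suc r2"] r(1) by (auto simp: pt_twocol split: if_splits)
    qed
    have r1a: "r1 = r2 - 1"
    proof (rule ccontr)
      assume "r1 \<noteq> r2 - 1"
      then have "Suc r1 < r2" using r(1) by simp
      then show False using mo[of r1] P[of r1] P[of "Suc r1"] r(1) True by (auto simp: pt_twocol split: if_splits)
    qed
    have a2: "a \<ge> 2" using r(1) r1a r2a by simp
    have "mu = twocol (a - 2) (h + 1)"
      by (rule twocol_eqI[OF mu]) (use P r1a r2a a2 in \<open>auto simp: pt_twocol\<close>)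
    then show ?thesis using a2 by simp
  next
    case False
    then have h1: "h \<ge> 1" using r2b by simp
    have r2a: "r2 = a + 2 * h - 1"
    proof (rule ccontr)
      assume "r2 \<noteq> a + 2 * h - 1"
      then have "Suc r2 < a + 2 * h" using r2b by simp
      then show False using mo[of r2] P[of r2] P[of "Suc r2"] r(1) False by (auto simp: pt_twocol split: if_splits)
    qed
    show ?thesis
    proof (cases "r1 < a")
      case True
      have r1a: "r1 = a - 1"
      proof (rule ccontr)
        assume "r1 \<noteq> a - 1"
        then have "Suc r1 < a" using True by simp
        then show False using mo[of r1] P[of r1] P[of "Suc r1"] r(1) False by (auto simp: pt_twocol split: if_splits)
      qed
      have a1: "a \<ge> 1" using True by simp
      have "mu = twocol (a - 1) h"
        by (rule twocol_eqI[OF mu]) (use P r1a r2a a1 h1 in \<open>auto simp: pt_twocol\<close>)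
      then show ?thesis using a1 h1 by simp
    next
      case False2: False
      have r1a: "r1 = r2 - 1"
      proof (rule ccontr)
        assume "r1 \<noteq> r2 - 1"
        then have "Suc r1 < r2" using r(1) by simp
        then show False using mo[of r1] P[of r1] P[of "Suc r1"] r(1) False2 r2a by (auto simp: pt_twocol split: if_splits)
      qed
      have "mu = twocol a (h - 1)"
        by (rule twocol_eqI[OF mu]) (use P r1a r2a h1 False2 in \<open>auto simp: pt_twocol\<close>)
      then show ?thesis using h1 by simp
    qed
  qed
next
  assume R: ?R
  have ip: "is_partition (twocol a h)" by (rule twocol_part)
  show ?L
  proof (cases "h \<ge> 1 \<and> mu = twocol a (h - 1)")
    case True
    then show ?thesis unfolding V2_def using ip by (auto simp: pt_twocol sum_twocol)
  next
    case F1: False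
    show ?thesis
    proof (cases "a \<ge> 1 \<and> h \<ge> 1 \<and> mu = twocol (a - 1) h")
      case True
      then show ?thesis unfolding V2_def using ip by (auto simp: pt_twocol sum_twocol)
    next
      case False
      then have "a \<ge> 2 \<and> mu = twocol (a - 2) (h + 1)" using R F1 by blast
      then show ?thesis unfolding V2_def using ip by (auto simp: pt_twocol sum_twocol)
    qed
  qed
qed


lemma twocol_in_P: "2 * a + 2 * h = d \<Longrightarrow> twocol a h \<in> partitions_of d"
  unfolding partitions_of_def using twocol_part sum_twocol by simp

lemma cc_twocol_step:
  assumes ah: "a + h = Suc n"
  shows "cc (Suc n) (twocol a h) =
    (if h \<ge> 1 then cc n (twocol a (h - 1)) else 0)
  + (if a \<ge> 1 \<and> h \<ge> 1 then cc n (twocol (a - 1) h) else 0)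
  + (if a \<ge> 2 then cc n (twocol (a - 2) (h + 1)) else 0)"
proof -
  define m1 where "m1 = twocol a (h - 1)"
  define m2 where "m2 = twocol (a - 1) h"
  define m3 where "m3 = twocol (a - 2) (h + 1)"
  let ?P = "partitions_of (2 * n)"
  have f: "finite ?P" by (rule finite_partitions)
  have l12: "h \<ge> 1 \<Longrightarrow> a \<ge> 1 \<Longrightarrow> m1 \<noteq> m2"
  proof -
    assume "h \<ge> 1" "a \<ge> 1"
    then have "length m1 \<noteq> length m2" unfolding m1_def m2_def length_twocol by arith
    then show ?thesis by metis
  qed
  have l13: "h \<ge> 1 \<Longrightarrow> a \<ge> 2 \<Longrightarrow> m1 \<noteq> m3"
  proof -
    assume "h \<ge> 1" "a \<ge> 2"
    then have "length m1 \<noteq> length m3" unfolding m1_def m3_def length_twocol by arith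
    then show ?thesis by metis
  qed
  have l23: "a \<ge> 2 \<Longrightarrow> m2 \<noteq> m3"
  proof -
    assume "a \<ge> 2"
    then have "length m2 \<noteq> length m3" unfolding m2_def m3_def length_twocol by arith
    then show ?thesis by metis
  qed
  have split: "(if twocol a h \<in> V2 mu then cc n mu else 0) =
      (if h \<ge> 1 \<and> mu = m1 then cc n mu else 0) + (if a \<ge> 1 \<and> h \<ge> 1 \<and> mu = m2 then cc n mu else 0)
    + (if a \<ge> 2 \<and> mu = m3 then cc n mu else 0)" if mu: "mu \<in> ?P" for mu
  proof -
    have ip: "is_partition mu" using mu unfolding partitions_of_def by simp
    show ?thesis unfolding pred_char[OF ip] m1_def[symmetric] m2_def[symmetric] m3_def[symmetric]
      using l12 l13 l23 by auto
  qed
  have m1P: "h \<ge> 1 \<Longrightarrow> m1 \<in> ?P" unfolding m1_def by (rule twocol_in_P) (use ah in simp)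
  have m2P: "a \<ge> 1 \<Longrightarrow> m2 \<in> ?P" unfolding m2_def by (rule twocol_in_P) (use ah in simp)
  have m3P: "a \<ge> 2 \<Longrightarrow> m3 \<in> ?P" unfolding m3_def by (rule twocol_in_P) (use ah in simp)
  have s1: "(\<Sum>mu\<in>?P. if h \<ge> 1 \<and> mu = m1 then cc n mu else 0) = (if h \<ge> 1 then cc n m1 else 0)"
  proof (cases "h \<ge> 1")
    case True then show ?thesis using m1P f by (simp add: sum.delta')
  next
    case False
    then have "(\<Sum>mu\<in>?P. 0::int) = 0" by simp
    with False show ?thesis by (smt (verit, best) sum.neutral)
  qed
  have s2: "(\<Sum>mu\<in>?P. if a \<ge> 1 \<and> h \<ge> 1 \<and> mu = m2 then cc n mu else 0) = (if a \<ge> 1 \<and> h \<ge> 1 then cc n m2 else 0)"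
  proof (cases "a \<ge> 1 \<and> h \<ge> 1")
    case True then show ?thesis using m2P f by (simp add: sum.delta')
  next
    case False
    then have "(\<Sum>mu\<in>?P. 0::int) = 0" by simp
    with False show ?thesis by (smt (verit, best) sum.neutral)
  qed
  have s3: "(\<Sum>mu\<in>?P. if a \<ge> 2 \<and> mu = m3 then cc n mu else 0) = (if a \<ge> 2 then cc n m3 else 0)"
  proof (cases "a \<ge> 2")
    case True then show ?thesis using m3P f by (simp add: sum.delta')
  next
    case False
    then have "(\<Sum>mu\<in>?P. 0::int) = 0" by simp
    with False show ?thesis by (smt (verit, best) sum.neutral)
  qed
  have "cc (Suc n) (twocol a h) = (\<Sum>mu\<in>?P. if twocol a h \<in> V2 mu then cc n mu else 0)" by simp
  also have "\<dots> = (\<Sum>mu\<in>?P. (if h \<ge> 1 \<and> mu = m1 then cc n mu else 0) + (if a \<ge> 1 \<and> h \<ge> 1 \<and> mu = m2 then cc n mu else 0)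
    + (if a \<ge> 2 \<and> mu = m3 then cc n mu else 0))"
    by (rule sum.cong[OF refl]) (rule split)
  also have "\<dots> = (if h \<ge> 1 then cc n m1 else 0) + (if a \<ge> 1 \<and> h \<ge> 1 then cc n m2 else 0) + (if a \<ge> 2 then cc n m3 else 0)"
    unfolding sum.distrib s1 s2 s3 ..
  finally show ?thesis unfolding m1_def m2_def m3_def .
qed

lemma paths_0: "paths 0 0 = {[]}"
  unfolding paths_def by auto

lemma cc_twocol: "h \<le> n \<Longrightarrow> cc n (twocol (n - h) h) = int (card (paths n (int h)))"
proof (induction n arbitrary: h)
  case 0
  then have "twocol (0 - h) h = []" by (simp add: twocol_def)
  then show ?case using 0 by (simp add: paths_0)
next
  case (Suc n)
  define a where "a = Suc n - h"
  have ah: "a + h = Suc n" using Suc.prems unfolding a_def by simp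
  have t1: "(if h \<ge> 1 then cc n (twocol a (h - 1)) else 0) = int (card (paths n (int h - 1)))"
  proof (cases "h \<ge> 1")
    case True
    then have "cc n (twocol (n - (h - 1)) (h - 1)) = int (card (paths n (int (h - 1))))"
      using Suc.IH[of "h - 1"] Suc.prems by simp
    moreover have "n - (h - 1) = a" using ah True by simp
    moreover have "int (h - 1) = int h - 1" using True by simp
    ultimately show ?thesis using True by simp
  next
    case False then show ?thesis using paths_empty by simp
  qed
  have t2: "(if a \<ge> 1 \<and> h \<ge> 1 then cc n (twocol (a - 1) h) else 0) = (if int h > 0 then int (card (paths n (int h))) else 0)"
  proof (cases "a \<ge> 1")
    case True
    then have "h \<le> n" "a - 1 = n - h" using ah by auto
    then show ?thesis using Suc.IH[of h] True by simp
  next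
    case False
    then have "int h > int n" using ah by simp
    then show ?thesis using False paths_empty by simp
  qed
  have t3: "(if a \<ge> 2 then cc n (twocol (a - 2) (h + 1)) else 0) = int (card (paths n (int h + 1)))"
  proof (cases "a \<ge> 2")
    case True
    then have "h + 1 \<le> n" "a - 2 = n - (h + 1)" using ah by auto
    then show ?thesis using Suc.IH[of "h + 1"] True by (simp add: add.commute)
  next
    case False
    then have "int h + 1 > int n" using ah by simp
    then show ?thesis using False paths_empty by simp
  qed
  have "cc (Suc n) (twocol (Suc n - h) h) = cc (Suc n) (twocol a h)" unfolding a_def ..
  also have "\<dots> = int (card (paths n (int h - 1))) + (if int h > 0 then int (card (paths n (int h))) else 0)
     + int (card (paths n (int h + 1)))"
    unfolding cc_twocol_step[OF ah] t1 t2 t3 ..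
  also have "\<dots> = int (card (paths (Suc n) (int h)))"
    unfolding card_paths_Suc[of "int h" n, OF of_nat_0_le_iff] by simp
  finally show ?case .
qed

lemma cc_riordan: "cc n (replicate n 2) = int (riordan n)"
proof -
  have "twocol (n - 0) 0 = replicate n 2" by (simp add: twocol_def)
  then show ?thesis using cc_twocol[of 0 n] unfolding riordan_def riordan_paths_eq by simp
qed

theorem proposition4p1:
  fixes n N :: nat
  assumes "n \<ge> 1" and "N \<ge> 2 * n"
  shows "(\<exists>c :: nat list \<Rightarrow> int.
            m11 N ^ n = (\<Sum>lam\<in>partitions_of (2 * n). const (c lam) * schur lam N))
       \<and> (\<forall>c :: nat list \<Rightarrow> int.
            m11 N ^ n = (\<Sum>lam\<in>partitions_of (2 * n). const (c lam) * schur lam N)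
            \<longrightarrow> c (replicate n 2) = int (riordan n))"
proof -
  have ex: "m11 N ^ n = (\<Sum>lam\<in>partitions_of (2 * n). const (cc n lam) * schur lam N)"
    unfolding expansion_L
    by (rule sum.cong[OF refl]) (simp add: schur_eq partitions_of_def)
  have rp: "replicate n 2 \<in> partitions_of (2 * n)"
    unfolding partitions_of_def is_partition_def by (auto simp: sum_list_replicate sorted_wrt_iff_nth_less)
  show ?thesis
  proof (intro conjI exI allI impI)
    show "m11 N ^ n = (\<Sum>lam\<in>partitions_of (2 * n). const (cc n lam) * schur lam N)" by (rule ex)
  next
    fix c :: "nat list \<Rightarrow> int"
    assume "m11 N ^ n = (\<Sum>lam\<in>partitions_of (2 * n). const (c lam) * schur lam N)"
    then have "(\<Sum>lam\<in>partitions_of (2 * n). const (c lam) * schur lam N) =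
      (\<Sum>lam\<in>partitions_of (2 * n). const (cc n lam) * schur lam N)" using ex by simp
    then have "\<forall>lam\<in>partitions_of (2 * n). c lam = cc n lam"
      by (rule uniqueness[OF assms(2)])
    then show "c (replicate n 2) = int (riordan n)" using rp cc_riordan by simp
  qed
qed


end
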